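(* For any integers $A\ge2$, $H\ge2$ and any $K\ge A^{H-1}$, there exists a POMDP learning problem (a parameter set $\varTheta$, parameterization and prior $\nu^1$) with $S=O=2$ and $|\mathscr A|=A$, horizon $H$, such that every learning algorithm $\phi$ satisfies $$\mathrm{BReg}(\phi,K)\ge\frac1{20}\sqrt{A^{H-1}K}.$$
   Context: A finite-horizon POMDP is a tuple $(\mathscr S,\mathscr A,\mathscr O,H,b_1,T,Z,r)$ with finite state set $\mathscr S$ ($|\mathscr S|=S$), finite action set $\mathscr A$ ($|\mathscr A|=A$), finite observation set $\mathscr O$ ($|\mathscr O|=O$), horizon $H\in\mathbb N$, initial state distribution $b_1\in\Delta(\mathscr S)$, transition kernels $T_h:\mathscr S\times\mathscr A\to\Delta(\mathscr S)$ for $h\in[H-1]$, observation kernels $Z_h:\mathscr S\to\Delta(\mathscr O)$ for $h\in[H]$, and rewards $r_h:\mathscr O\times\mathscr A\to[0,1]$ for $h\in[H]$. A (deterministic) policy $\pi=(\pi_h)_{h=1}^H$ consists of maps $\pi_h:(\mathscr O\times\mathscr A)^{h-1}\times\mathscr O\to\mathscr A$; $\varPi$ is the set of all such policies. A trajectory is $\tau=(o_h,a_h)_{h=1}^H\in\mathscr T:=(\mathscr O\times\mathscr A)^H$. Its probability under $\pi$ is $\Pr^\pi(\tau)=\pi(\tau)\Pr^-(\tau)$, where $\pi(\tau)=\prod_{h=1}^H\mathbf 1\{\pi_h(\tau_{h-1},o_h)=a_h\}$ ($\tau_{h}$ = first $h$ pairs of $\tau$) and $\Pr^-(\tau)=\sum_{s_{1:H}}b_1(s_1)Z_H(o_H\mid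 s_H)\prod_{h=1}^{H-1}Z_h(o_h\mid s_h)T_h(s_{h+1}\mid s_h,a_h)$. The value of $\pi$ is $V^\pi=\sum_\tau\Pr^\pi(\tau)\sum_{h=1}^Hr_h(o_h,a_h)$, and $V^*=\max_{\pi\in\varPi}V^\pi$. Learning setting: $\mathscr S,\mathscr A,\mathscr O,H,r$ are known; $(b_1,T,Z)$ depends on an unknown parameter $\theta$ in a known set $\varTheta$ via a known parameterization; subscripts $\theta$ denote quantities of the POMDP with parameter $\theta$. The true parameter $\theta^*$ is random with prior $\nu^1\in\Delta(\varTheta)$. In episodes $k=1,2,\dots$, with data $\mathcal D_k=(\tau^j,\pi^j)_{j=1}^{k-1}$, a learning algorithm $\phi=(\phi_k)_k$ draws $\pi^k\sim\phi_k(\mathcal D_k)\in\Delta(\varPi)$, applies it for the whole episode and observes $\tau^k\sim\Pr^{\pi^k}_{\theta^*}$. The Bayesian regret is $\mathrm{BReg}(\phi,K)=\mathbb E^\phi\big[\sum_{k=1}^K(V^*_{\theta^*}-V^{\pi^k}_{\theta^*})\big]$. *)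

theory Defs
  imports "HOL-Probability.Probability"
begin

text \<open>States are 0..<S, actions 0..<A, observations 0..<nO.
  Steps are indexed 0..<H (step h here is step h+1 in the paper).
  A trajectory is a list of (observation, action) pairs of length H.
  A policy is a single function pi hist o, where hist is the list of the
  previous (o,a) pairs (its length determines the step) and o is the
  current observation; pi_h(tau_{h-1}, o_h) = pi tau_{h-1} o_h.\<close>

type_synonym traj = "(nat \<times> nat) list"
type_synonym policy = "(nat \<times> nat) list \<Rightarrow> nat \<Rightarrow> nat"
type_synonym data = "(traj \<times> policy) list"

text \<open>The POMDP part depending on the parameter: (b1, T, Z).
  trans h s a s' = T_h(s' | s, a);  obsk h s o = Z_h(o | s).\<close>
record model =
  init :: "nat \<Rightarrow> real"
  trans :: "nat \<Rightarrow> nat \<Rightarrow> nat \<Rightarrow> nat \<Rightarrow> real"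
  obsk :: "nat \<Rightarrow> nat \<Rightarrow> nat \<Rightarrow> real"

definition is_dist :: "nat \<Rightarrow> (nat \<Rightarrow> real) \<Rightarrow> bool" where
  "is_dist n p \<longleftrightarrow> (\<forall>i<n. p i \<ge> 0) \<and> (\<Sum>i<n. p i) = 1"

definition valid_model :: "nat \<Rightarrow> nat \<Rightarrow> nat \<Rightarrow> nat \<Rightarrow> model \<Rightarrow> bool" where
  "valid_model S nO A H M \<longleftrightarrow>
     is_dist S (init M) \<and>
     (\<forall>h<H - 1. \<forall>s<S. \<forall>a<A. is_dist S (trans M h s a)) \<and>
     (\<forall>h<H. \<forall>s<S. is_dist nO (obsk M h s))"

definition valid_rewards :: "nat \<Rightarrow> nat \<Rightarrow> nat \<Rightarrow> (nat \<Rightarrow> nat \<Rightarrow> nat \<Rightarrow> real) \<Rightarrow> bool" where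
  "valid_rewards nO A H r \<longleftrightarrow> (\<forall>h<H. \<forall>ob<nO. \<forall>a<A. 0 \<le> r h ob a \<and> r h ob a \<le> 1)"

definition policies :: "nat \<Rightarrow> policy set" where
  "policies A = {\<pi>. \<forall>hist ob. \<pi> hist ob < A}"

definition trajs :: "nat \<Rightarrow> nat \<Rightarrow> nat \<Rightarrow> traj set" where
  "trajs nO A H = {\<tau>. length \<tau> = H \<and> set \<tau> \<subseteq> {0..<nO} \<times> {0..<A}}"

definition state_seqs :: "nat \<Rightarrow> nat \<Rightarrow> nat list set" where
  "state_seqs S H = {ss. length ss = H \<and> set ss \<subseteq> {0..<S}}"

definition traj_prob_minus :: "nat \<Rightarrow> nat \<Rightarrow> model \<Rightarrow> traj \<Rightarrow> real" where
  "traj_prob_minus S H M \<tau> =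
     (\<Sum>ss\<in>state_seqs S H.
        init M (ss ! 0)
        * (\<Prod>h<H. obsk M h (ss ! h) (fst (\<tau> ! h)))
        * (\<Prod>h<H - 1. trans M h (ss ! h) (snd (\<tau> ! h)) (ss ! Suc h)))"

definition pol_ind :: "nat \<Rightarrow> policy \<Rightarrow> traj \<Rightarrow> real" where
  "pol_ind H \<pi> \<tau> = (\<Prod>h<H. if \<pi> (take h \<tau>) (fst (\<tau> ! h)) = snd (\<tau> ! h) then 1 else 0)"

definition traj_prob :: "nat \<Rightarrow> nat \<Rightarrow> model \<Rightarrow> policy \<Rightarrow> traj \<Rightarrow> real" where
  "traj_prob S H M \<pi> \<tau> = pol_ind H \<pi> \<tau> * traj_prob_minus S H M \<tau>"

definition pvalue :: "nat \<Rightarrow> nat \<Rightarrow> nat \<Rightarrow> nat \<Rightarrow> (nat \<Rightarrow> nat \<Rightarrow> nat \<Rightarrow> real) \<Rightarrow> model \<Rightarrow> policy \<Rightarrow> real" where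
  "pvalue S nO A H r M \<pi> =
     (\<Sum>\<tau>\<in>trajs nO A H. traj_prob S H M \<pi> \<tau> * (\<Sum>h<H. r h (fst (\<tau> ! h)) (snd (\<tau> ! h))))"

text \<open>V^* = max over policies (the supremum is attained)\<close>
definition opt_value :: "nat \<Rightarrow> nat \<Rightarrow> nat \<Rightarrow> nat \<Rightarrow> (nat \<Rightarrow> nat \<Rightarrow> nat \<Rightarrow> real) \<Rightarrow> model \<Rightarrow> real" where
  "opt_value S nO A H r M = (SUP \<pi>\<in>policies A. pvalue S nO A H r M \<pi>)"

text \<open>A learning algorithm: phi k D_k is a distribution over policies
  (episode index k starts at 1).\<close>
definition learning_alg :: "nat \<Rightarrow> (nat \<Rightarrow> data \<Rightarrow> policy pmf) \<Rightarrow> bool" where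
  "learning_alg A \<phi> \<longleftrightarrow> (\<forall>k D. set_pmf (\<phi> k D) \<subseteq> policies A)"

text \<open>Expected regret of the remaining n episodes, starting at episode k with data D,
  for the fixed true model M.\<close>
primrec regret_from ::
  "nat \<Rightarrow> nat \<Rightarrow> nat \<Rightarrow> nat \<Rightarrow> (nat \<Rightarrow> nat \<Rightarrow> nat \<Rightarrow> real) \<Rightarrow> model
   \<Rightarrow> (nat \<Rightarrow> data \<Rightarrow> policy pmf) \<Rightarrow> nat \<Rightarrow> nat \<Rightarrow> data \<Rightarrow> real" where
  "regret_from S nO A H r M \<phi> 0 k D = 0"
| "regret_from S nO A H r M \<phi> (Suc n) k D =
     measure_pmf.expectation (\<phi> k D)
       (\<lambda>\<pi>. (opt_value S nO A H r M - pvalue S nO A H r M \<pi>)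
             + (\<Sum>\<tau>\<in>trajs nO A H. traj_prob S H M \<pi> \<tau> *
                   regret_from S nO A H r M \<phi> n (Suc k) (D @ [(\<tau>, \<pi>)])))"

definition BReg ::
  "nat \<Rightarrow> nat \<Rightarrow> nat \<Rightarrow> nat \<Rightarrow> (nat \<Rightarrow> nat \<Rightarrow> nat \<Rightarrow> real) \<Rightarrow> ('t \<Rightarrow> model) \<Rightarrow> 't pmf
   \<Rightarrow> (nat \<Rightarrow> data \<Rightarrow> policy pmf) \<Rightarrow> nat \<Rightarrow> real" where
  "BReg S nO A H r par prior \<phi> K =
     measure_pmf.expectation prior (\<lambda>\<theta>. regret_from S nO A H r (par \<theta>) \<phi> K 1 [])"

end

theory Submission
  imports Defs "HOL-Library.Countable"
begin


lemma pmf_int: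
  assumes "\<And>x. x \<in> set_pmf p \<Longrightarrow> \<bar>f x\<bar> \<le> B"
  shows "integrable (measure_pmf p) (f :: _ \<Rightarrow> real)"
  by (rule measure_pmf.integrable_const_bound[where B=B]) (auto simp: AE_measure_pmf_iff assms)

lemma pmf_exp_cong:
  assumes "\<And>x. x \<in> set_pmf p \<Longrightarrow> f x = g x"
  shows "measure_pmf.expectation p f = measure_pmf.expectation p (g :: _ \<Rightarrow> real)"
  by (rule integral_cong_AE) (auto simp: AE_measure_pmf_iff assms)

lemma pmf_exp_mono:
  assumes "integrable (measure_pmf p) f" "integrable (measure_pmf p) g"
    "\<And>x. x \<in> set_pmf p \<Longrightarrow> f x \<le> (g x :: real)"
  shows "measure_pmf.expectation p f \<le> measure_pmf.expectation p g"
  by (rule integral_mono_AE) (auto simp: AE_measure_pmf_iff assms)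

lemma pmf_exp_const: "measure_pmf.expectation p (\<lambda>_. c) = (c::real)"
  by simp

lemma pmf_exp_bound:
  assumes "\<And>x. x \<in> set_pmf p \<Longrightarrow> \<bar>f x\<bar> \<le> (B::real)"
  shows "\<bar>measure_pmf.expectation p f\<bar> \<le> B"
proof -
  have i: "integrable (measure_pmf p) f" using pmf_int assms by blast
  have "measure_pmf.expectation p f \<le> measure_pmf.expectation p (\<lambda>_. B)"
    by (rule pmf_exp_mono[OF i]) (use assms abs_le_D1 in auto)
  moreover have "measure_pmf.expectation p (\<lambda>_. - B) \<le> measure_pmf.expectation p f"
    by (rule pmf_exp_mono[OF _ i]) (use assms abs_le_D2 in force)+
  ultimately show ?thesis by simp
qed

primrec Ev :: "(nat \<Rightarrow> data \<Rightarrow> policy pmf) \<Rightarrow> traj set \<Rightarrow> (policy \<Rightarrow> traj \<Rightarrow> real)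
   \<Rightarrow> (data \<Rightarrow> real) \<Rightarrow> nat \<Rightarrow> nat \<Rightarrow> data \<Rightarrow> real" where
  "Ev \<phi> Tr P g 0 k D = g D"
| "Ev \<phi> Tr P g (Suc n) k D = measure_pmf.expectation (\<phi> k D)
      (\<lambda>\<pi>. \<Sum>\<tau>\<in>Tr. P \<pi> \<tau> * Ev \<phi> Tr P g n (Suc k) (D @ [(\<tau>, \<pi>)]))"

definition kern :: "nat \<Rightarrow> traj set \<Rightarrow> (policy \<Rightarrow> traj \<Rightarrow> real) \<Rightarrow> bool" where
  "kern A Tr P \<longleftrightarrow> finite Tr \<and> (\<forall>\<pi>\<in>policies A. (\<forall>\<tau>\<in>Tr. 0 \<le> P \<pi> \<tau>) \<and> sum (P \<pi>) Tr = 1)"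

definition bdd_len :: "(data \<Rightarrow> real) \<Rightarrow> bool" where
  "bdd_len f \<longleftrightarrow> (\<forall>m. \<exists>B. \<forall>D. length D = m \<longrightarrow> \<bar>f D\<bar> \<le> B)"

lemma alg_pol: "learning_alg A \<phi> \<Longrightarrow> \<pi> \<in> set_pmf (\<phi> k D) \<Longrightarrow> \<pi> \<in> policies A"
  unfolding learning_alg_def by blast

lemma kern_sum_bound:
  assumes "kern A Tr P" "\<pi> \<in> policies A" "\<And>\<tau>. \<tau> \<in> Tr \<Longrightarrow> \<bar>G \<tau>\<bar> \<le> B"
  shows "\<bar>\<Sum>\<tau>\<in>Tr. P \<pi> \<tau> * G \<tau>\<bar> \<le> B"
proof -
  have "\<bar>\<Sum>\<tau>\<in>Tr. P \<pi> \<tau> * G \<tau>\<bar> \<le> (\<Sum>\<tau>\<in>Tr. \<bar>P \<pi> \<tau> * G \<tau>\<bar>)" by (rule sum_abs)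
  also have "\<dots> \<le> (\<Sum>\<tau>\<in>Tr. P \<pi> \<tau> * B)"
    using assms unfolding kern_def by (intro sum_mono) (auto simp: abs_mult intro: mult_left_mono)
  also have "\<dots> = B" using assms unfolding kern_def by (simp add: sum_distrib_right[symmetric])
  finally show ?thesis .
qed

lemma INT:
  assumes "kern A Tr P" "learning_alg A \<phi>" "bdd_len G"
  shows "integrable (measure_pmf (\<phi> k D)) (\<lambda>\<pi>. \<Sum>\<tau>\<in>Tr. P \<pi> \<tau> * G (D @ [(\<tau>, \<pi>)]))"
proof -
  obtain B where B: "\<And>D'. length D' = Suc (length D) \<Longrightarrow> \<bar>G D'\<bar> \<le> B"
    using assms(3) unfolding bdd_len_def by metis
  show ?thesis
    by (rule pmf_int[where B=B], rule kern_sum_bound[OF assms(1)])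
       (auto intro: alg_pol[OF assms(2)] B)
qed

lemma Ev_bound:
  assumes "kern A Tr P" "learning_alg A \<phi>"
  shows "(\<And>D'. length D' = length D + n \<Longrightarrow> \<bar>g D'\<bar> \<le> B) \<Longrightarrow> \<bar>Ev \<phi> Tr P g n k D\<bar> \<le> B"
proof (induction n arbitrary: k D)
  case 0 then show ?case by simp
next
  case (Suc n)
  have "\<bar>Ev \<phi> Tr P g n (Suc k) (D @ [(\<tau>, \<pi>)])\<bar> \<le> B" for \<tau> \<pi>
    by (rule Suc.IH) (rule Suc.prems, simp)
  then show ?case
    by (simp, intro pmf_exp_bound kern_sum_bound[OF assms(1)])
       (auto intro: alg_pol[OF assms(2)])
qed

lemma Ev_bdd:
  assumes "kern A Tr P" "learning_alg A \<phi>" "bdd_len g"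
  shows "bdd_len (\<lambda>D. Ev \<phi> Tr P g n k D)"
  unfolding bdd_len_def
proof
  fix m
  obtain B where "\<And>D. length D = m + n \<Longrightarrow> \<bar>g D\<bar> \<le> B" using assms(3) unfolding bdd_len_def by metis
  then show "\<exists>B. \<forall>D. length D = m \<longrightarrow> \<bar>Ev \<phi> Tr P g n k D\<bar> \<le> B"
    using Ev_bound[OF assms(1,2)] by metis
qed

lemma Ev_cong:
  assumes "kern A Tr P" "learning_alg A \<phi>"
  shows "(\<And>D'. length D' = length D + n \<Longrightarrow> f D' = g D') \<Longrightarrow> Ev \<phi> Tr P f n k D = Ev \<phi> Tr P g n k D"
proof (induction n arbitrary: k D)
  case 0 then show ?case by simp
next
  case (Suc n)
  show ?case by (simp, rule pmf_exp_cong, rule sum.cong) (auto intro!: Suc.IH Suc.prems)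
qed

lemma Ev_mono:
  assumes "kern A Tr P" "learning_alg A \<phi>" "bdd_len f" "bdd_len g"
  shows "(\<And>D'. length D' = length D + n \<Longrightarrow> f D' \<le> g D') \<Longrightarrow> Ev \<phi> Tr P f n k D \<le> Ev \<phi> Tr P g n k D"
proof (induction n arbitrary: k D)
  case 0 then show ?case by simp
next
  case (Suc n)
  show ?case
    apply simp
    apply (rule pmf_exp_mono)
      apply (rule INT[OF assms(1,2) Ev_bdd[OF assms(1,2,3)]])
     apply (rule INT[OF assms(1,2) Ev_bdd[OF assms(1,2,4)]])
    apply (rule sum_mono)
    using assms(1) alg_pol[OF assms(2)] unfolding kern_def
    by (auto intro!: mult_left_mono Suc.IH Suc.prems)
qed

lemma Ev_const:
  assumes "kern A Tr P" "learning_alg A \<phi>"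
  shows "Ev \<phi> Tr P (\<lambda>_. c) n k D = c"
proof (induction n arbitrary: k D)
  case 0 then show ?case by simp
next
  case (Suc n)
  have "Ev \<phi> Tr P (\<lambda>_. c) (Suc n) k D = measure_pmf.expectation (\<phi> k D) (\<lambda>_. c)"
    unfolding Ev.simps Suc
    apply (rule pmf_exp_cong)
    using assms(1) alg_pol[OF assms(2)] unfolding kern_def
    by (simp add: sum_distrib_right[symmetric])
  then show ?case by simp
qed

lemma Ev_add:
  assumes "kern A Tr P" "learning_alg A \<phi>" "bdd_len f" "bdd_len g"
  shows "Ev \<phi> Tr P (\<lambda>D. f D + g D) n k D = Ev \<phi> Tr P f n k D + Ev \<phi> Tr P g n k D"
proof (induction n arbitrary: k D)
  case 0 then show ?case by simp
next
  case (Suc n)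
  show ?case
    apply (simp add: Suc distrib_left sum.distrib)
    apply (rule Bochner_Integration.integral_add)
     apply (rule INT[OF assms(1,2) Ev_bdd[OF assms(1,2,3)]])
    apply (rule INT[OF assms(1,2) Ev_bdd[OF assms(1,2,4)]])
    done
qed

lemma Ev_mult:
  shows "Ev \<phi> Tr P (\<lambda>D. c * f D) n k D = c * Ev \<phi> Tr P f n k D"
proof (induction n arbitrary: k D)
  case 0 then show ?case by simp
next
  case (Suc n)
  show ?case
    by (simp add: Suc sum_distrib_left[symmetric] mult.left_commute)
qed

lemma bdd_len_add: "bdd_len f \<Longrightarrow> bdd_len g \<Longrightarrow> bdd_len (\<lambda>D. f D + g D)"
  unfolding bdd_len_def
  by (metis (no_types, opaque_lifting) abs_triangle_ineq add_mono order_trans)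

lemma bdd_len_mult: "bdd_len f \<Longrightarrow> bdd_len (\<lambda>D. c * f D)"
  unfolding bdd_len_def
  by (metis abs_ge_zero abs_mult mult_left_mono)

lemma bdd_len_const: "bdd_len (\<lambda>D. c)"
  unfolding bdd_len_def by auto

lemma bdd_len_sum: "finite I \<Longrightarrow> (\<And>i. i \<in> I \<Longrightarrow> bdd_len (f i)) \<Longrightarrow> bdd_len (\<lambda>D. \<Sum>i\<in>I. f i D)"
  by (induction I rule: finite_induct) (auto intro: bdd_len_add bdd_len_const)

lemma Ev_sum:
  assumes "kern A Tr P" "learning_alg A \<phi>"
  shows "finite I \<Longrightarrow> (\<And>i. i \<in> I \<Longrightarrow> bdd_len (f i)) \<Longrightarrow>
    Ev \<phi> Tr P (\<lambda>D. \<Sum>i\<in>I. f i D) n k D = (\<Sum>i\<in>I. Ev \<phi> Tr P (f i) n k D)"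
proof (induction I rule: finite_induct)
  case empty then show ?case using Ev_const[OF assms] by simp
next
  case (insert x F)
  then show ?case
    by (simp add: Ev_add[OF assms _ bdd_len_sum])
qed

lemma bdd_len_sum_list:
  assumes "\<And>x. \<bar>h x\<bar> \<le> C"
  shows "bdd_len (\<lambda>D. \<Sum>x\<leftarrow>D. h x)"
  unfolding bdd_len_def
proof
  fix m
  have "\<bar>\<Sum>x\<leftarrow>D. h x\<bar> \<le> real (length D) * C" for D
  proof (induction D)
    case Nil then show ?case by simp
  next
    case (Cons a D) then show ?case using assms[of a] by (simp add: algebra_simps)
  qed
  then show "\<exists>B. \<forall>D. length D = m \<longrightarrow> \<bar>\<Sum>x\<leftarrow>D. h x\<bar> \<le> B"
    by (intro exI[of _ "real m * C"]) auto
qed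



lemma Ev_additive:
  assumes K: "kern A Tr P" and L: "learning_alg A \<phi>"
    and hC: "\<And>x. \<bar>h x\<bar> \<le> C" and hbC: "\<And>\<pi>. \<bar>hb \<pi>\<bar> \<le> C'"
    and hb: "\<And>\<pi>. \<pi> \<in> policies A \<Longrightarrow> hb \<pi> = (\<Sum>\<tau>\<in>Tr. P \<pi> \<tau> * h (\<tau>, \<pi>))"
  shows "Ev \<phi> Tr P (\<lambda>D. \<Sum>x\<leftarrow>D. h x) n k D - (\<Sum>x\<leftarrow>D. h x)
       = Ev \<phi> Tr P (\<lambda>D. \<Sum>x\<leftarrow>D. hb (snd x)) n k D - (\<Sum>x\<leftarrow>D. hb (snd x))"
proof (induction n arbitrary: k D)
  case 0 then show ?case by simp
next
  case (Suc n)
  define c where "c = (\<Sum>x\<leftarrow>D. h x) - (\<Sum>x\<leftarrow>D. hb (snd x))"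
  have bh: "bdd_len (\<lambda>D. \<Sum>x\<leftarrow>D. hb (snd x))"
    by (rule bdd_len_sum_list[where C=C']) (use hbC in auto)
  have ih: "Ev \<phi> Tr P (\<lambda>D. \<Sum>x\<leftarrow>D. h x) n (Suc k) (D @ [(\<tau>, \<pi>)])
     = Ev \<phi> Tr P (\<lambda>D. \<Sum>x\<leftarrow>D. hb (snd x)) n (Suc k) (D @ [(\<tau>, \<pi>)]) + c + h (\<tau>, \<pi>) - hb \<pi>" for \<tau> \<pi>
    using Suc.IH[of "Suc k" "D @ [(\<tau>, \<pi>)]"] unfolding c_def by simp
  have pt: "(\<Sum>\<tau>\<in>Tr. P \<pi> \<tau> * Ev \<phi> Tr P (\<lambda>D. \<Sum>x\<leftarrow>D. h x) n (Suc k) (D @ [(\<tau>, \<pi>)]))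
     = (\<Sum>\<tau>\<in>Tr. P \<pi> \<tau> * Ev \<phi> Tr P (\<lambda>D. \<Sum>x\<leftarrow>D. hb (snd x)) n (Suc k) (D @ [(\<tau>, \<pi>)])) + c"
    if "\<pi> \<in> set_pmf (\<phi> k D)" for \<pi>
  proof -
    have pol: "\<pi> \<in> policies A" using alg_pol[OF L that] .
    have s1: "sum (P \<pi>) Tr = 1" using K pol unfolding kern_def by auto
    have "(\<Sum>\<tau>\<in>Tr. P \<pi> \<tau> * Ev \<phi> Tr P (\<lambda>D. \<Sum>x\<leftarrow>D. h x) n (Suc k) (D @ [(\<tau>, \<pi>)]))
       = (\<Sum>\<tau>\<in>Tr. P \<pi> \<tau> * Ev \<phi> Tr P (\<lambda>D. \<Sum>x\<leftarrow>D. hb (snd x)) n (Suc k) (D @ [(\<tau>, \<pi>)]))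
         + c * sum (P \<pi>) Tr + (\<Sum>\<tau>\<in>Tr. P \<pi> \<tau> * h (\<tau>, \<pi>)) - hb \<pi> * sum (P \<pi>) Tr"
      by (simp add: ih algebra_simps sum.distrib sum_subtractf sum_distrib_left sum_distrib_right)
    then show ?thesis using s1 hb[OF pol] by simp
  qed
  have "Ev \<phi> Tr P (\<lambda>D. \<Sum>x\<leftarrow>D. h x) (Suc n) k D = measure_pmf.expectation (\<phi> k D)
     (\<lambda>\<pi>. (\<Sum>\<tau>\<in>Tr. P \<pi> \<tau> * Ev \<phi> Tr P (\<lambda>D. \<Sum>x\<leftarrow>D. hb (snd x)) n (Suc k) (D @ [(\<tau>, \<pi>)])) + c)"
    unfolding Ev.simps by (rule pmf_exp_cong) (rule pt)
  also have "\<dots> = Ev \<phi> Tr P (\<lambda>D. \<Sum>x\<leftarrow>D. hb (snd x)) (Suc n) k D + c"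
    unfolding Ev.simps
    by (subst Bochner_Integration.integral_add) (auto intro: INT[OF K L Ev_bdd[OF K L bh]])
  finally show ?case unfolding c_def by simp
qed

lemma Ev_change:
  assumes "\<And>\<pi> \<tau>. \<pi> \<in> policies A \<Longrightarrow> \<tau> \<in> Tr \<Longrightarrow> P' \<pi> \<tau> = P \<pi> \<tau> * \<rho> \<pi> \<tau>"
    and L: "learning_alg A \<phi>"
  shows "(\<Prod>x\<leftarrow>D. \<rho> (snd x) (fst x)) * Ev \<phi> Tr P' g n k D
       = Ev \<phi> Tr P (\<lambda>D. (\<Prod>x\<leftarrow>D. \<rho> (snd x) (fst x)) * g D) n k D"
proof (induction n arbitrary: k D)
  case 0 then show ?case by simp
next
  case (Suc n)
  let ?W = "\<lambda>D. \<Prod>x\<leftarrow>D. \<rho> (snd x) (fst x)"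
  have "Ev \<phi> Tr P (\<lambda>D. ?W D * g D) (Suc n) k D = measure_pmf.expectation (\<phi> k D)
     (\<lambda>\<pi>. ?W D * (\<Sum>\<tau>\<in>Tr. P' \<pi> \<tau> * Ev \<phi> Tr P' g n (Suc k) (D @ [(\<tau>, \<pi>)])))"
    unfolding Ev.simps
    apply (rule pmf_exp_cong)
    apply (simp add: Suc.IH[symmetric] sum_distrib_left)
    apply (rule sum.cong, simp)
    using assms(1) alg_pol[OF L] by (simp add: mult_ac)
  also have "\<dots> = ?W D * Ev \<phi> Tr P' g (Suc n) k D" by simp
  finally show ?case by simp
qed

lemma bdd_len_exp: "bdd_len f \<Longrightarrow> bdd_len (\<lambda>D. exp (f D / 2))"
  unfolding bdd_len_def
proof
  fix m assume "\<forall>m. \<exists>B. \<forall>D. length D = m \<longrightarrow> \<bar>f D\<bar> \<le> B"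
  then obtain B where B: "\<And>D. length D = m \<Longrightarrow> \<bar>f D\<bar> \<le> B" by metis
  have "\<bar>exp (f D / 2)\<bar> \<le> exp (B / 2)" if "length D = m" for D
    using B[OF that] by simp
  then show "\<exists>B. \<forall>D. length D = m \<longrightarrow> \<bar>exp (f D / 2)\<bar> \<le> B" by blast
qed

lemma exp_tangent: "exp (m / 2) * (1 + (y - m) / 2) \<le> exp (y / (2::real))"
proof -
  have "1 + (y - m) / 2 \<le> exp ((y - m) / 2)" by (rule exp_ge_add_one_self)
  then have "exp (m / 2) * (1 + (y - m) / 2) \<le> exp (m / 2) * exp ((y - m) / 2)"
    by (intro mult_left_mono) auto
  also have "\<dots> = exp (y / 2)" by (simp add: exp_add[symmetric] field_simps)
  finally show ?thesis .
qed

lemma Ev_jensen: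
  assumes K: "kern A Tr P" and L: "learning_alg A \<phi>" and bS: "bdd_len S"
  shows "exp (Ev \<phi> Tr P S n k D / 2) \<le> Ev \<phi> Tr P (\<lambda>D. exp (S D / 2)) n k D"
proof (induction n arbitrary: k D)
  case 0 then show ?case by simp
next
  case (Suc n)
  let ?y = "\<lambda>\<pi> \<tau>. Ev \<phi> Tr P S n (Suc k) (D @ [(\<tau>, \<pi>)])"
  let ?z = "\<lambda>\<pi> \<tau>. Ev \<phi> Tr P (\<lambda>D. exp (S D / 2)) n (Suc k) (D @ [(\<tau>, \<pi>)])"
  let ?F = "\<lambda>\<pi>. \<Sum>\<tau>\<in>Tr. P \<pi> \<tau> * ?y \<pi> \<tau>"
  define m where "m = measure_pmf.expectation (\<phi> k D) ?F"
  have iF: "integrable (measure_pmf (\<phi> k D)) ?F" by (rule INT[OF K L Ev_bdd[OF K L bS]])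
  have iE: "integrable (measure_pmf (\<phi> k D)) (\<lambda>\<pi>. \<Sum>\<tau>\<in>Tr. P \<pi> \<tau> * exp (?y \<pi> \<tau> / 2))"
    by (rule INT[OF K L bdd_len_exp[OF Ev_bdd[OF K L bS]]])
  have iZ: "integrable (measure_pmf (\<phi> k D)) (\<lambda>\<pi>. \<Sum>\<tau>\<in>Tr. P \<pi> \<tau> * ?z \<pi> \<tau>)"
    by (rule INT[OF K L Ev_bdd[OF K L bdd_len_exp[OF bS]]])
  have iA: "integrable (measure_pmf (\<phi> k D)) (\<lambda>\<pi>. exp (m/2) * (1 - m/2) + exp (m/2) / 2 * ?F \<pi>)"
    using iF by auto
  have "exp (m / 2) = measure_pmf.expectation (\<phi> k D) (\<lambda>\<pi>. exp (m/2) * (1 - m/2) + exp (m/2) / 2 * ?F \<pi>)"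
    using iF by (simp add: m_def algebra_simps)
  also have "\<dots> \<le> measure_pmf.expectation (\<phi> k D) (\<lambda>\<pi>. \<Sum>\<tau>\<in>Tr. P \<pi> \<tau> * exp (?y \<pi> \<tau> / 2))"
  proof (rule pmf_exp_mono[OF iA iE])
    fix \<pi> assume "\<pi> \<in> set_pmf (\<phi> k D)"
    then have pol: "\<pi> \<in> policies A" using alg_pol[OF L] by blast
    have s1: "sum (P \<pi>) Tr = 1" and nn: "\<And>\<tau>. \<tau> \<in> Tr \<Longrightarrow> 0 \<le> P \<pi> \<tau>"
      using K pol unfolding kern_def by auto
    have "exp (m/2) * (1 - m/2) + exp (m/2) / 2 * ?F \<pi>
        = (\<Sum>\<tau>\<in>Tr. P \<pi> \<tau> * (exp (m / 2) * (1 + (?y \<pi> \<tau> - m) / 2)))"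
    proof -
      have "(\<Sum>\<tau>\<in>Tr. P \<pi> \<tau> * (exp (m / 2) * (1 + (?y \<pi> \<tau> - m) / 2)))
         = (\<Sum>\<tau>\<in>Tr. exp (m/2) * (1 - m/2) * P \<pi> \<tau> + exp (m/2) / 2 * (P \<pi> \<tau> * ?y \<pi> \<tau>))"
        by (rule sum.cong) (auto simp: field_simps)
      also have "\<dots> = exp (m/2) * (1 - m/2) * sum (P \<pi>) Tr + exp (m/2) / 2 * ?F \<pi>"
        by (simp add: sum.distrib sum_distrib_left)
      finally show ?thesis using s1 by simp
    qed
    also have "\<dots> \<le> (\<Sum>\<tau>\<in>Tr. P \<pi> \<tau> * exp (?y \<pi> \<tau> / 2))"
      by (intro sum_mono mult_left_mono exp_tangent nn)
    finally show "exp (m/2) * (1 - m/2) + exp (m/2) / 2 * ?F \<pi> \<le> (\<Sum>\<tau>\<in>Tr. P \<pi> \<tau> * exp (?y \<pi> \<tau> / 2))" .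
  qed
  also have "\<dots> \<le> measure_pmf.expectation (\<phi> k D) (\<lambda>\<pi>. \<Sum>\<tau>\<in>Tr. P \<pi> \<tau> * ?z \<pi> \<tau>)"
  proof (rule pmf_exp_mono[OF iE iZ])
    fix \<pi> assume "\<pi> \<in> set_pmf (\<phi> k D)"
    then have pol: "\<pi> \<in> policies A" using alg_pol[OF L] by blast
    then show "(\<Sum>\<tau>\<in>Tr. P \<pi> \<tau> * exp (?y \<pi> \<tau> / 2)) \<le> (\<Sum>\<tau>\<in>Tr. P \<pi> \<tau> * ?z \<pi> \<tau>)"
      using K unfolding kern_def by (auto intro!: sum_mono mult_left_mono Suc.IH)
  qed
  finally show ?case by (simp add: m_def)
qed



lemma amgm_pt:
  fixes V f M c :: real
  assumes "0 \<le> V" "0 \<le> f" "f \<le> M" "0 < c"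
  shows "V^2 * f - f \<le> (M/2 + M/2 * (1/(2*c) + c/2)) * V^2 + (M/2 * (c - 1/c)) * V
           + (- M/2 + M/2 * (1/(2*c) + c/2))"
proof -
  have M0: "0 \<le> M" using assms by linarith
  have a: "\<bar>f - M/2\<bar> \<le> M/2" using assms by (auto simp: abs_if)
  have s1: "(V^2 - 1) * (f - M/2) \<le> \<bar>V^2 - 1\<bar> * (M/2)"
  proof -
    have "(V^2 - 1) * (f - M/2) \<le> \<bar>V^2 - 1\<bar> * \<bar>f - M/2\<bar>"
      by (metis abs_ge_self abs_mult)
    also have "\<dots> \<le> \<bar>V^2 - 1\<bar> * (M/2)" by (intro mult_left_mono a) auto
    finally show ?thesis .
  qed
  have s2: "\<bar>V^2 - 1\<bar> = \<bar>V - 1\<bar> * (V + 1)"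
  proof -
    have "V^2 - 1 = (V - 1) * (V + 1)" by (simp add: power2_eq_square algebra_simps)
    then show ?thesis using assms(1) by (simp add: abs_mult)
  qed
  have s3: "\<bar>V - 1\<bar> * (V + 1) \<le> (V - 1)^2 / (2*c) + c * (V + 1)^2 / 2"
  proof -
    have "0 \<le> (\<bar>V - 1\<bar> - c * (V + 1))^2" by simp
    then have "2 * c * (\<bar>V - 1\<bar> * (V + 1)) \<le> \<bar>V - 1\<bar>^2 + c^2 * (V + 1)^2"
      by (simp add: power2_eq_square algebra_simps)
    then have "2 * c * (\<bar>V - 1\<bar> * (V + 1)) \<le> (V - 1)^2 + c^2 * (V + 1)^2" by simp
    then show ?thesis using assms(4)
      by (simp add: field_simps power2_eq_square)
  qed
  have "(V^2 - 1) * (f - M/2) \<le> ((V - 1)^2 / (2*c) + c * (V + 1)^2 / 2) * (M/2)"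
  proof -
    have "\<bar>V^2 - 1\<bar> * (M/2) \<le> ((V - 1)^2 / (2*c) + c * (V + 1)^2 / 2) * (M/2)"
      unfolding s2 using s3 M0 by (intro mult_right_mono) auto
    then show ?thesis using s1 by linarith
  qed
  moreover have "(M/2 + M/2 * (1/(2*c) + c/2)) * V^2 + (M/2 * (c - 1/c)) * V
           + (- M/2 + M/2 * (1/(2*c) + c/2))
     = (M/2) * (V^2 - 1) + ((V - 1)^2 / (2*c) + c * (V + 1)^2 / 2) * (M/2)"
    using assms(4) by (simp add: field_simps power2_eq_square)
  moreover have "V^2 * f - f = (V^2 - 1) * (f - M/2) + (M/2) * (V^2 - 1)"
    by (simp add: algebra_simps)
  ultimately show ?thesis by linarith
qed

lemma prod_list_exp:
  fixes \<rho> :: "'a \<Rightarrow> real"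
  assumes "\<And>x. 0 < \<rho> x"
  shows "(\<Prod>x\<leftarrow>D. \<rho> x) = exp (\<Sum>x\<leftarrow>D. ln (\<rho> x))"
proof (induction D)
  case (Cons a D)
  have "exp (ln (\<rho> a)) = \<rho> a" by (rule exp_ln[OF assms])
  then show ?case using Cons by (simp add: exp_add)
qed simp

lemma bdd_len_mul: "bdd_len f \<Longrightarrow> bdd_len g \<Longrightarrow> bdd_len (\<lambda>D. f D * g D)"
  unfolding bdd_len_def
proof
  fix m assume "\<forall>m. \<exists>B. \<forall>D. length D = m \<longrightarrow> \<bar>f D\<bar> \<le> B" "\<forall>m. \<exists>B. \<forall>D. length D = m \<longrightarrow> \<bar>g D\<bar> \<le> B"
  then obtain B1 B2 where B1: "\<And>D. length D = m \<Longrightarrow> \<bar>f D\<bar> \<le> B1" and B2: "\<And>D. length D = m \<Longrightarrow> \<bar>g D\<bar> \<le> B2"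
    by metis
  have "\<bar>f D * g D\<bar> \<le> B1 * B2" if "length D = m" for D
    using B1[OF that] B2[OF that] by (simp add: abs_mult mult_mono')
  then show "\<exists>B. \<forall>D. length D = m \<longrightarrow> \<bar>f D * g D\<bar> \<le> B" by blast
qed

lemma Ev_tv:
  assumes K: "kern A Tr P" and K': "kern A Tr P'" and L: "learning_alg A \<phi>"
    and rpos: "\<And>\<pi> \<tau>. 0 < \<rho> \<pi> \<tau>" and lnC: "\<And>\<pi> \<tau>. \<bar>ln (\<rho> \<pi> \<tau>)\<bar> \<le> C"
    and ch: "\<And>\<pi> \<tau>. \<pi> \<in> policies A \<Longrightarrow> \<tau> \<in> Tr \<Longrightarrow> P' \<pi> \<tau> = P \<pi> \<tau> * \<rho> \<pi> \<tau>"
    and bf: "bdd_len f" and fM: "\<And>D'. length D' = n \<Longrightarrow> 0 \<le> f D' \<and> f D' \<le> M"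
    and c: "0 < c"
  shows "Ev \<phi> Tr P' f n k [] \<le> Ev \<phi> Tr P f n k []
     + M/2 * ((1 - exp (Ev \<phi> Tr P (\<lambda>D. \<Sum>x\<leftarrow>D. ln (\<rho> (snd x) (fst x))) n k [] / 2)) / c + 2 * c)"
proof -
  define S where "S = (\<lambda>D::data. \<Sum>x\<leftarrow>D. ln (\<rho> (snd x) (fst x)))"
  define W where "W = (\<lambda>D::data. \<Prod>x\<leftarrow>D. \<rho> (snd x) (fst x))"
  define V where "V = (\<lambda>D. exp (S D / 2))"
  have bS: "bdd_len S" unfolding S_def by (rule bdd_len_sum_list) (rule lnC)
  have bV: "bdd_len V" unfolding V_def by (rule bdd_len_exp[OF bS])
  have WV: "W D = V D ^ 2" for D
  proof -
    have "W D = exp (S D)" unfolding W_def S_def by (rule prod_list_exp) (use rpos in auto)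
    also have "\<dots> = exp (S D / 2) ^ 2" by (simp add: exp_double[symmetric])
    finally show ?thesis unfolding V_def .
  qed
  have bW: "bdd_len W" unfolding WV using bdd_len_mul[OF bV bV] by (simp add: power2_eq_square)
  have bWf: "bdd_len (\<lambda>D. W D * f D)" by (rule bdd_len_mul[OF bW bf])
  have M0: "0 \<le> M" using fM[of "replicate n undefined"] by auto
  define B where "B = Ev \<phi> Tr P V n k []"
  have e1: "Ev \<phi> Tr P' f n k [] = Ev \<phi> Tr P (\<lambda>D. W D * f D) n k []"
    using Ev_change[of A Tr P' P \<rho> \<phi> "[]" f n k, OF ch L] unfolding W_def by simp
  have EW: "Ev \<phi> Tr P W n k [] = 1"
    using Ev_change[of A Tr P' P \<rho> \<phi> "[]" "\<lambda>_. 1" n k, OF ch L] Ev_const[OF K' L]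
    unfolding W_def by simp
  have B1: "B \<le> 1"
  proof -
    have "B \<le> Ev \<phi> Tr P (\<lambda>D. 1/2 * W D + 1/2) n k []"
      unfolding B_def
    proof (rule Ev_mono[OF K L bV])
      show "bdd_len (\<lambda>D. 1/2 * W D + 1/2)" by (intro bdd_len_add bdd_len_mult bW bdd_len_const)
      fix D' :: data
      have "0 \<le> (V D' - 1)^2" by simp
      then show "V D' \<le> 1/2 * W D' + 1/2" unfolding WV by (simp add: power2_eq_square algebra_simps)
    qed
    also have "\<dots> = Ev \<phi> Tr P (\<lambda>D. 1/2 * W D) n k [] + Ev \<phi> Tr P (\<lambda>D. 1/2) n k []"
      by (rule Ev_add[OF K L bdd_len_mult[OF bW] bdd_len_const])
    also have "\<dots> = 1"
      by (simp only: Ev_mult Ev_const[OF K L] EW)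
    finally show ?thesis .
  qed
  have B0: "exp (Ev \<phi> Tr P S n k [] / 2) \<le> B"
    unfolding B_def V_def by (rule Ev_jensen[OF K L bS])
  define \<alpha> where "\<alpha> = M/2 + M/2 * (1/(2*c) + c/2)"
  define \<beta> where "\<beta> = M/2 * (c - 1/c)"
  define \<gamma> where "\<gamma> = - M/2 + M/2 * (1/(2*c) + c/2)"
  have "Ev \<phi> Tr P (\<lambda>D. W D * f D) n k [] - Ev \<phi> Tr P f n k []
      = Ev \<phi> Tr P (\<lambda>D. W D * f D + (-1) * f D) n k []"
    by (subst Ev_add[OF K L bWf bdd_len_mult[OF bf]], simp only: Ev_mult)
  also have "\<dots> \<le> Ev \<phi> Tr P (\<lambda>D. \<alpha> * W D + \<beta> * V D + \<gamma>) n k []"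
  proof (rule Ev_mono[OF K L])
    show "bdd_len (\<lambda>D. W D * f D + (-1) * f D)" by (intro bdd_len_add bdd_len_mult bWf bf)
    show "bdd_len (\<lambda>D. \<alpha> * W D + \<beta> * V D + \<gamma>)"
      by (intro bdd_len_add bdd_len_mult bW bV bdd_len_const)
    fix D' :: data assume "length D' = length [] + n"
    then have "0 \<le> f D'" "f D' \<le> M" using fM by auto
    then show "W D' * f D' + (-1) * f D' \<le> \<alpha> * W D' + \<beta> * V D' + \<gamma>"
      unfolding WV \<alpha>_def \<beta>_def \<gamma>_def using amgm_pt[of "V D'" "f D'" M c] c
      by (simp add: V_def)
  qed
  also have "\<dots> = \<alpha> + \<beta> * B + \<gamma>"
    by (simp add: Ev_add[OF K L bdd_len_add[OF bdd_len_mult[OF bW] bdd_len_mult[OF bV]] bdd_len_const]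
        Ev_add[OF K L bdd_len_mult[OF bW] bdd_len_mult[OF bV]] Ev_mult Ev_const[OF K L] EW B_def)
  also have "\<dots> = M/2 * ((1 - B) / c + c * (1 + B))"
    unfolding \<alpha>_def \<beta>_def \<gamma>_def using c by (simp add: field_simps)
  also have "\<dots> \<le> M/2 * ((1 - exp (Ev \<phi> Tr P S n k [] / 2)) / c + 2 * c)"
  proof (intro mult_left_mono add_mono divide_right_mono)
    show "c * (1 + B) \<le> 2 * c" using B1 c by simp
  qed (use B0 c M0 in auto)
  finally have X: "Ev \<phi> Tr P (\<lambda>D. W D * f D) n k [] - Ev \<phi> Tr P f n k []
     \<le> M/2 * ((1 - exp (Ev \<phi> Tr P S n k [] / 2)) / c + 2 * c)" .
  show ?thesis using X e1 unfolding S_def by linarith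
qed



primrec pre :: "policy \<Rightarrow> nat \<Rightarrow> traj" where
  "pre \<pi> 0 = []"
| "pre \<pi> (Suc h) = pre \<pi> h @ [(0, \<pi> (pre \<pi> h) 0)]"

definition tj :: "nat \<Rightarrow> policy \<Rightarrow> nat \<Rightarrow> traj" where
  "tj H \<pi> b = pre \<pi> (H - 1) @ [(b, \<pi> (pre \<pi> (H - 1)) b)]"

definition arm :: "nat \<Rightarrow> policy \<Rightarrow> nat list" where
  "arm H \<pi> = map snd (pre \<pi> (H - 1))"

definition Qk :: "nat \<Rightarrow> (policy \<Rightarrow> real) \<Rightarrow> policy \<Rightarrow> traj \<Rightarrow> real" where
  "Qk H q \<pi> \<tau> = (if \<tau> = tj H \<pi> 1 then q \<pi> else if \<tau> = tj H \<pi> 0 then 1 - q \<pi> else 0)"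

lemma pre_len[simp]: "length (pre \<pi> h) = h"
  by (induction h) auto

lemma pre_take: "i \<le> h \<Longrightarrow> take i (pre \<pi> h) = pre \<pi> i"
  by (induction h) (auto simp: le_Suc_eq)

lemma pre_nth: "i < h \<Longrightarrow> pre \<pi> h ! i = (0, \<pi> (pre \<pi> i) 0)"
  by (induction h) (auto simp: less_Suc_eq nth_append)

lemma tj_len: "1 \<le> H \<Longrightarrow> length (tj H \<pi> b) = H"
  by (simp add: tj_def)

lemma tj_ne: "tj H \<pi> 0 \<noteq> tj H \<pi> 1"
  by (simp add: tj_def)

lemma tj_inj: "tj H \<pi> a = tj H \<pi> b \<Longrightarrow> a = b"
  by (simp add: tj_def)

lemma trajs_eq: "trajs nO A H = {xs. set xs \<subseteq> {0..<nO} \<times> {0..<A} \<and> length xs = H}"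
  unfolding trajs_def by auto

lemma finite_trajs: "finite (trajs nO A H)"
  unfolding trajs_eq by (rule finite_lists_length_eq) auto

lemma tj_in: "\<pi> \<in> policies A \<Longrightarrow> b < 2 \<Longrightarrow> 1 \<le> H \<Longrightarrow> tj H \<pi> b \<in> trajs 2 A H"
  unfolding trajs_def policies_def
  by (auto simp: tj_len tj_def in_set_conv_nth pre_nth)

lemma Qk_sum:
  assumes "\<pi> \<in> policies A" "1 \<le> H"
  shows "(\<Sum>\<tau>\<in>trajs 2 A H. Qk H q \<pi> \<tau> * g \<tau>) = q \<pi> * g (tj H \<pi> 1) + (1 - q \<pi>) * g (tj H \<pi> 0)"
proof -
  have "(\<Sum>\<tau>\<in>trajs 2 A H. Qk H q \<pi> \<tau> * g \<tau>) = (\<Sum>\<tau>\<in>trajs 2 A H.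
      (if tj H \<pi> 1 = \<tau> then q \<pi> * g (tj H \<pi> 1) else 0) + (if tj H \<pi> 0 = \<tau> then (1 - q \<pi>) * g (tj H \<pi> 0) else 0))"
    by (rule sum.cong) (auto simp: Qk_def dest: tj_inj)
  also have "\<dots> = q \<pi> * g (tj H \<pi> 1) + (1 - q \<pi>) * g (tj H \<pi> 0)"
    using tj_in[OF assms(1) _ assms(2)] by (simp add: sum.distrib finite_trajs)
  finally show ?thesis .
qed

lemma kern_Qk:
  assumes "\<And>\<pi>. 0 \<le> q \<pi> \<and> q \<pi> \<le> 1" "1 \<le> H"
  shows "kern A (trajs 2 A H) (Qk H q)"
  unfolding kern_def
proof (intro conjI ballI finite_trajs)
  fix \<pi> assume p: "\<pi> \<in> policies A"
  show "sum (Qk H q \<pi>) (trajs 2 A H) = 1" using Qk_sum[OF p assms(2), of q "\<lambda>_. 1"] by simp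
  fix \<tau> show "0 \<le> Qk H q \<pi> \<tau>" using assms(1)[of \<pi>] by (simp add: Qk_def)
qed

lemma tj_unique:
  assumes len: "length \<tau> = H" and H: "1 \<le> H"
    and pol: "\<And>h. h < H \<Longrightarrow> \<pi> (take h \<tau>) (fst (\<tau> ! h)) = snd (\<tau> ! h)"
    and z: "\<And>h. h < H - 1 \<Longrightarrow> fst (\<tau> ! h) = 0"
  shows "\<tau> = tj H \<pi> (fst (\<tau> ! (H - 1)))"
proof -
  have tk: "h \<le> H - 1 \<Longrightarrow> take h \<tau> = pre \<pi> h" for h
  proof (induction h)
    case 0 then show ?case by simp
  next
    case (Suc h)
    then have hl: "h < length \<tau>" using len H by simp
    have "take (Suc h) \<tau> = take h \<tau> @ [\<tau> ! h]" by (rule take_Suc_conv_app_nth[OF hl])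
    also have "\<tau> ! h = (fst (\<tau> ! h), snd (\<tau> ! h))" by simp
    also have "fst (\<tau> ! h) = 0" using z Suc.prems by simp
    also have "snd (\<tau> ! h) = \<pi> (pre \<pi> h) 0"
      using pol[of h] z[of h] Suc by simp
    finally show ?case using Suc by simp
  qed
  have hl: "H - 1 < length \<tau>" using len H by simp
  have "\<tau> = take (Suc (H - 1)) \<tau>" using len H by simp
  also have "\<dots> = take (H - 1) \<tau> @ [\<tau> ! (H - 1)]" by (rule take_Suc_conv_app_nth[OF hl])
  also have "\<tau> ! (H - 1) = (fst (\<tau> ! (H - 1)), snd (\<tau> ! (H - 1)))" by simp
  also have "snd (\<tau> ! (H - 1)) = \<pi> (pre \<pi> (H - 1)) (fst (\<tau> ! (H - 1)))"
    using pol[of "H - 1"] tk[of "H - 1"] H by simp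
  also have "take (H - 1) \<tau> = pre \<pi> (H - 1)" using tk by simp
  finally show ?thesis unfolding tj_def .
qed



definition mdl :: "nat \<Rightarrow> real \<Rightarrow> nat list \<Rightarrow> model" where
  "mdl H \<epsilon> Lk = \<lparr>init = (\<lambda>s. if s = 1 then 1 else 0),
    trans = (\<lambda>h s a s'. if s' = (if s = 1 \<and> a = Lk ! h then 1 else 0) then 1 else 0),
    obsk = (\<lambda>h s ob. if h < H - 1 then (if ob = 0 then 1 else 0)
       else if ob = 1 then (if s = 1 then 1/2 + \<epsilon> else 1/2 - \<epsilon>)
       else (if s = 1 then 1/2 - \<epsilon> else 1/2 + \<epsilon>))\<rparr>"

primrec st :: "nat list \<Rightarrow> traj \<Rightarrow> nat \<Rightarrow> nat" where
  "st Lk \<tau> 0 = 1"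
| "st Lk \<tau> (Suc h) = (if st Lk \<tau> h = 1 \<and> snd (\<tau> ! h) = Lk ! h then 1 else 0)"

lemma st_01: "st Lk \<tau> h < 2"
  by (cases h) (auto split: if_splits)

lemma st_iff: "st Lk \<tau> h = (if \<forall>i<h. snd (\<tau> ! i) = Lk ! i then 1 else 0)"
  by (induction h) (auto simp: less_Suc_eq)

lemma valid_mdl:
  assumes "0 \<le> \<epsilon>" "\<epsilon> \<le> 1/2"
  shows "valid_model 2 2 A H (mdl H \<epsilon> Lk)"
  unfolding valid_model_def is_dist_def mdl_def using assms
  by (auto simp: numeral_2_eq_2 lessThan_Suc less_Suc_eq)

lemma tpm:
  assumes H: "1 \<le> H"
  shows "traj_prob_minus 2 H (mdl H \<epsilon> Lk) \<tau> = (\<Prod>h<H. obsk (mdl H \<epsilon> Lk) h (st Lk \<tau> h) (fst (\<tau> ! h)))"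
proof -
  define M where "M = mdl H \<epsilon> Lk"
  define ss0 where "ss0 = map (st Lk \<tau>) [0..<H]"
  define g where "g = (\<lambda>ss. init M (ss ! 0)
        * (\<Prod>h<H. obsk M h (ss ! h) (fst (\<tau> ! h)))
        * (\<Prod>h<H - 1. trans M h (ss ! h) (snd (\<tau> ! h)) (ss ! Suc h)))"
  have fin: "finite (state_seqs 2 H)"
  proof -
    have "state_seqs 2 H = {xs. set xs \<subseteq> {0..<2} \<and> length xs = H}" unfolding state_seqs_def by auto
    then show ?thesis by (simp add: finite_lists_length_eq)
  qed
  have in0: "ss0 \<in> state_seqs 2 H" unfolding state_seqs_def ss0_def using st_01 by auto
  have zero: "g ss = 0" if ss: "ss \<in> state_seqs 2 H" "ss \<noteq> ss0" for ss
  proof -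
    have lss: "length ss = H" using ss unfolding state_seqs_def by auto
    have "\<exists>h<H. ss ! h \<noteq> ss0 ! h"
    proof (rule ccontr)
      assume "\<not> ?thesis"
      then have "ss = ss0" by (intro nth_equalityI) (auto simp: lss ss0_def)
      then show False using ss by simp
    qed
    then obtain h where h: "h < H" "ss ! h \<noteq> ss0 ! h" and mn: "\<And>i. i < h \<Longrightarrow> ss ! i = ss0 ! i"
      using exists_least_iff[of "\<lambda>h. h < H \<and> ss ! h \<noteq> ss0 ! h"] by (metis less_trans)
    show ?thesis
    proof (cases h)
      case 0
      then have "ss ! 0 \<noteq> 1" using h by (simp add: ss0_def)
      then show ?thesis by (simp add: g_def M_def mdl_def)
    next
      case (Suc h')
      have h'l: "h' < H - 1" using h Suc by simp
      have "trans M h' (ss ! h') (snd (\<tau> ! h')) (ss ! Suc h') = 0"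
        using mn[of h'] h Suc by (simp add: M_def mdl_def ss0_def)
      then have "(\<Prod>h<H - 1. trans M h (ss ! h) (snd (\<tau> ! h)) (ss ! Suc h)) = 0"
        using h'l by (intro prod_zero) auto
      then show ?thesis by (simp add: g_def)
    qed
  qed
  have "traj_prob_minus 2 H M \<tau> = sum g (state_seqs 2 H)"
    unfolding traj_prob_minus_def g_def ..
  also have "\<dots> = g ss0"
  proof -
    have "sum g (state_seqs 2 H) = g ss0 + sum g (state_seqs 2 H - {ss0})"
      by (rule sum.remove[OF fin in0])
    also have "sum g (state_seqs 2 H - {ss0}) = 0" by (rule sum.neutral) (use zero in auto)
    finally show ?thesis by simp
  qed
  also have "\<dots> = (\<Prod>h<H. obsk M h (st Lk \<tau> h) (fst (\<tau> ! h)))"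
  proof -
    have "init M (ss0 ! 0) = 1" using H by (simp add: ss0_def M_def mdl_def)
    moreover have "(\<Prod>h<H. obsk M h (ss0 ! h) (fst (\<tau> ! h))) = (\<Prod>h<H. obsk M h (st Lk \<tau> h) (fst (\<tau> ! h)))"
      by (rule prod.cong) (auto simp: ss0_def)
    moreover have "(\<Prod>h<H - 1. trans M h (ss0 ! h) (snd (\<tau> ! h)) (ss0 ! Suc h)) = 1"
      by (rule prod.neutral) (auto simp: ss0_def M_def mdl_def)
    ultimately show ?thesis by (simp add: g_def)
  qed
  finally show ?thesis unfolding M_def .
qed



definition qf :: "nat \<Rightarrow> real \<Rightarrow> nat list \<Rightarrow> policy \<Rightarrow> real" where
  "qf H \<epsilon> Lk \<pi> = (if arm H \<pi> = Lk then 1/2 + \<epsilon> else 1/2 - \<epsilon>)"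

lemma tj_nth_lt: "h < H - 1 \<Longrightarrow> tj H \<pi> b ! h = (0, \<pi> (pre \<pi> h) 0)"
  by (simp add: tj_def nth_append pre_nth)

lemma tj_nth_last: "tj H \<pi> b ! (H - 1) = (b, \<pi> (pre \<pi> (H - 1)) b)"
  by (simp add: tj_def nth_append)

lemma tj_nth_last': "tj H \<pi> b ! (H - Suc 0) = (b, \<pi> (pre \<pi> (H - Suc 0)) b)"
  by (simp add: tj_def nth_append)

lemma tj_take: "h \<le> H - 1 \<Longrightarrow> take h (tj H \<pi> b) = pre \<pi> h"
  by (simp add: tj_def pre_take)

lemma prod_last: "1 \<le> (H::nat) \<Longrightarrow> (\<Prod>h<H. f h) = (\<Prod>h<H - 1. f h) * (f (H - 1) :: real)"
proof -
  assume "1 \<le> H"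
  then have "H = Suc (H - 1)" by simp
  then have "(\<Prod>h<H. f h) = (\<Prod>h<Suc (H - 1). f h)" by metis
  then show ?thesis by simp
qed

lemma pol_ind_tj: "1 \<le> H \<Longrightarrow> pol_ind H \<pi> (tj H \<pi> b) = 1"
  unfolding pol_ind_def
proof (rule prod.neutral, intro ballI)
  fix h assume "1 \<le> H" "h \<in> {..<H}"
  then consider "h < H - 1" | "h = H - 1" by force
  then show "(if \<pi> (take h (tj H \<pi> b)) (fst (tj H \<pi> b ! h)) = snd (tj H \<pi> b ! h) then 1 else 0) = (1::real)"
    by cases (auto simp: tj_nth_lt tj_nth_last tj_nth_last' tj_take)
qed

lemma st_tj:
  assumes "length Lk = H - 1"
  shows "st Lk (tj H \<pi> b) (H - 1) = (if arm H \<pi> = Lk then 1 else 0)"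
proof -
  have "(\<forall>i<H - 1. snd (tj H \<pi> b ! i) = Lk ! i) \<longleftrightarrow> arm H \<pi> = Lk"
    using assms by (auto simp: tj_nth_lt arm_def list_eq_iff_nth_eq pre_nth)
  then show ?thesis by (simp add: st_iff)
qed

lemma st_tj': "length Lk = H - 1 \<Longrightarrow> st Lk (tj H \<pi> b) (H - Suc 0) = (if arm H \<pi> = Lk then 1 else 0)"
  using st_tj by simp

lemma TP:
  assumes pol: "\<pi> \<in> policies A" and tau: "\<tau> \<in> trajs 2 A H" and Lk: "length Lk = H - 1" and H: "1 \<le> H"
  shows "traj_prob 2 H (mdl H \<epsilon> Lk) \<pi> \<tau> = Qk H (qf H \<epsilon> Lk) \<pi> \<tau>"
proof -
  have val: "traj_prob 2 H (mdl H \<epsilon> Lk) \<pi> (tj H \<pi> b) =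
       obsk (mdl H \<epsilon> Lk) (H - 1) (if arm H \<pi> = Lk then 1 else 0) b" for b
  proof -
    have "(\<Prod>h<H - 1. obsk (mdl H \<epsilon> Lk) h (st Lk (tj H \<pi> b) h) (fst (tj H \<pi> b ! h))) = 1"
      by (rule prod.neutral) (auto simp: tj_nth_lt mdl_def)
    then show ?thesis
      unfolding traj_prob_def pol_ind_tj[OF H] tpm[OF H] prod_last[OF H]
      using Lk by (simp add: st_tj' tj_nth_last')
  qed
  consider (one) "\<tau> = tj H \<pi> 1" | (zero) "\<tau> = tj H \<pi> 0" | (other) "\<tau> \<noteq> tj H \<pi> 1" "\<tau> \<noteq> tj H \<pi> 0" by blast
  then show ?thesis
  proof cases
    case one then show ?thesis using val[of 1] H by (simp add: Qk_def qf_def mdl_def)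
  next
    case zero then show ?thesis using val[of 0] H tj_ne by (simp add: Qk_def qf_def mdl_def)
  next
    case other
    have Q0: "Qk H (qf H \<epsilon> Lk) \<pi> \<tau> = 0" using other by (simp add: Qk_def)
    have lt: "length \<tau> = H" and fs: "\<And>h. h < H \<Longrightarrow> fst (\<tau> ! h) < 2"
      using tau unfolding trajs_def by (auto simp: subset_iff in_set_conv_nth) (metis prod.collapse)
    show ?thesis
    proof (cases "pol_ind H \<pi> \<tau> = 0")
      case True then show ?thesis using Q0 by (simp add: traj_prob_def)
    next
      case False
      have pc: "\<pi> (take h \<tau>) (fst (\<tau> ! h)) = snd (\<tau> ! h)" if "h < H" for h
      proof (rule ccontr)
        assume "\<not> ?thesis"
        then have "pol_ind H \<pi> \<tau> = 0" unfolding pol_ind_def using that by (intro prod_zero) auto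
        then show False using False by simp
      qed
      have "\<exists>h<H - 1. fst (\<tau> ! h) \<noteq> 0"
      proof (rule ccontr)
        assume "\<not> ?thesis"
        then have "\<tau> = tj H \<pi> (fst (\<tau> ! (H - 1)))" by (intro tj_unique[OF lt H pc]) auto
        moreover have "fst (\<tau> ! (H - 1)) < 2" using fs H by simp
        ultimately show False using other
          by (cases "fst (\<tau> ! (H - 1))") (auto simp: less_Suc_eq)
      qed
      then obtain h where h: "h < H - 1" "fst (\<tau> ! h) \<noteq> 0" by blast
      have "(\<Prod>h<H. obsk (mdl H \<epsilon> Lk) h (st Lk \<tau> h) (fst (\<tau> ! h))) = 0"
        using h by (intro prod_zero) (auto intro!: bexI[of _ h] simp: mdl_def)
      then show ?thesis using Q0 by (simp add: traj_prob_def tpm[OF H])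
    qed
  qed
qed



definition rw :: "nat \<Rightarrow> nat \<Rightarrow> nat \<Rightarrow> nat \<Rightarrow> real" where
  "rw H h ob a = (if h = H - 1 \<and> ob = 1 then 1 else 0)"

definition gp :: "nat \<Rightarrow> real \<Rightarrow> nat list \<Rightarrow> policy \<Rightarrow> real" where
  "gp H \<epsilon> Lk \<pi> = 2 * \<epsilon> * (if arm H \<pi> = Lk then 0 else 1)"

definition Arms :: "nat \<Rightarrow> nat \<Rightarrow> nat list set" where
  "Arms A H = {xs. set xs \<subseteq> {0..<A} \<and> length xs = H - 1}"

lemma valid_rw: "valid_rewards 2 A H (rw H)"
  unfolding valid_rewards_def rw_def by auto

lemma sum_last: "1 \<le> (H::nat) \<Longrightarrow> (\<Sum>h<H. f h) = (\<Sum>h<H - 1. f h) + (f (H - 1) :: real)"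
proof -
  assume "1 \<le> H"
  then have "H = Suc (H - 1)" by simp
  then have "(\<Sum>h<H. f h) = (\<Sum>h<Suc (H - 1). f h)" by metis
  then show ?thesis by simp
qed

lemma R_tj: "1 \<le> H \<Longrightarrow> (\<Sum>h<H. rw H h (fst (tj H \<pi> b ! h)) (snd (tj H \<pi> b ! h))) = (if b = 1 then 1 else 0)"
  by (subst sum_last) (auto simp: rw_def tj_nth_last tj_nth_last' intro!: sum.neutral)

lemma pvalue_mdl:
  assumes pol: "\<pi> \<in> policies A" and Lk: "length Lk = H - 1" and H: "1 \<le> H"
  shows "pvalue 2 2 A H (rw H) (mdl H \<epsilon> Lk) \<pi> = qf H \<epsilon> Lk \<pi>"
proof -
  have "pvalue 2 2 A H (rw H) (mdl H \<epsilon> Lk) \<pi> =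
     (\<Sum>\<tau>\<in>trajs 2 A H. Qk H (qf H \<epsilon> Lk) \<pi> \<tau> * (\<Sum>h<H. rw H h (fst (\<tau> ! h)) (snd (\<tau> ! h))))"
    unfolding pvalue_def by (rule sum.cong) (auto simp: TP[OF pol _ Lk H])
  also have "\<dots> = qf H \<epsilon> Lk \<pi>" by (simp add: Qk_sum[OF pol H] R_tj[OF H])
  finally show ?thesis .
qed

definition pol0 :: "nat \<Rightarrow> nat list \<Rightarrow> policy" where
  "pol0 H Lk = (\<lambda>hist ob. if length hist < H - 1 then Lk ! length hist else 0)"

lemma pol0_pol: "Lk \<in> Arms A H \<Longrightarrow> 1 \<le> A \<Longrightarrow> pol0 H Lk \<in> policies A"
  unfolding policies_def pol0_def Arms_def by (auto simp: subset_iff)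

lemma arm_pol0: "length Lk = H - 1 \<Longrightarrow> arm H (pol0 H Lk) = Lk"
  unfolding arm_def by (auto simp: list_eq_iff_nth_eq pre_nth pol0_def)

lemma opt_mdl:
  assumes Lk: "Lk \<in> Arms A H" and A: "1 \<le> A" and H: "1 \<le> H" and e: "0 \<le> \<epsilon>"
  shows "opt_value 2 2 A H (rw H) (mdl H \<epsilon> Lk) = 1/2 + \<epsilon>"
proof -
  have len: "length Lk = H - 1" using Lk by (simp add: Arms_def)
  have "opt_value 2 2 A H (rw H) (mdl H \<epsilon> Lk) = Sup ((\<lambda>\<pi>. qf H \<epsilon> Lk \<pi>) ` policies A)"
    unfolding opt_value_def
    by (rule arg_cong[where f=Sup], rule image_cong) (auto simp: pvalue_mdl[OF _ len H])
  also have "\<dots> = 1/2 + \<epsilon>"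
  proof (rule cSup_eq_maximum)
    show "1/2 + \<epsilon> \<in> (\<lambda>\<pi>. qf H \<epsilon> Lk \<pi>) ` policies A"
      using pol0_pol[OF Lk A] arm_pol0[OF len] by (force simp: qf_def)
  qed (use e in \<open>auto simp: qf_def\<close>)
  finally show ?thesis .
qed

lemma kern_qf: "0 \<le> \<epsilon> \<Longrightarrow> \<epsilon> \<le> 1/2 \<Longrightarrow> 1 \<le> H \<Longrightarrow> kern A (trajs 2 A H) (Qk H (qf H \<epsilon> Lk))"
  by (rule kern_Qk) (auto simp: qf_def)

lemma regret_Ev:
  assumes L: "learning_alg A \<phi>" and Lk: "Lk \<in> Arms A H" and A: "1 \<le> A" and H: "1 \<le> H"
    and e: "0 \<le> \<epsilon>" "\<epsilon> \<le> 1/2"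
  shows "regret_from 2 2 A H (rw H) (mdl H \<epsilon> Lk) \<phi> n k D + (\<Sum>x\<leftarrow>D. gp H \<epsilon> Lk (snd x))
     = Ev \<phi> (trajs 2 A H) (Qk H (qf H \<epsilon> Lk)) (\<lambda>D. \<Sum>x\<leftarrow>D. gp H \<epsilon> Lk (snd x)) n k D"
proof (induction n arbitrary: k D)
  case 0 then show ?case by simp
next
  case (Suc n)
  have len: "length Lk = H - 1" using Lk by (simp add: Arms_def)
  let ?P = "Qk H (qf H \<epsilon> Lk)"
  let ?G = "\<lambda>D. \<Sum>x\<leftarrow>D. gp H \<epsilon> Lk (snd x)"
  have K: "kern A (trajs 2 A H) ?P" by (rule kern_qf[OF e H])
  have bG: "bdd_len ?G" by (rule bdd_len_sum_list[where C="2*\<epsilon>"]) (use e in \<open>auto simp: gp_def\<close>)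
  define c where "c = ?G D"
  have "regret_from 2 2 A H (rw H) (mdl H \<epsilon> Lk) \<phi> (Suc n) k D = measure_pmf.expectation (\<phi> k D)
     (\<lambda>\<pi>. (\<Sum>\<tau>\<in>trajs 2 A H. ?P \<pi> \<tau> * Ev \<phi> (trajs 2 A H) ?P ?G n (Suc k) (D @ [(\<tau>, \<pi>)])) + (- c))"
    unfolding regret_from.simps
  proof (rule pmf_exp_cong)
    fix \<pi> assume "\<pi> \<in> set_pmf (\<phi> k D)"
    then have pol: "\<pi> \<in> policies A" by (rule alg_pol[OF L])
    have s1: "sum (?P \<pi>) (trajs 2 A H) = 1" using K pol unfolding kern_def by auto
    have ih: "regret_from 2 2 A H (rw H) (mdl H \<epsilon> Lk) \<phi> n (Suc k) (D @ [(\<tau>, \<pi>)])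
       = Ev \<phi> (trajs 2 A H) ?P ?G n (Suc k) (D @ [(\<tau>, \<pi>)]) - c - gp H \<epsilon> Lk \<pi>" for \<tau>
      using Suc.IH[of "Suc k" "D @ [(\<tau>, \<pi>)]"] unfolding c_def by simp
    have gap: "opt_value 2 2 A H (rw H) (mdl H \<epsilon> Lk) - pvalue 2 2 A H (rw H) (mdl H \<epsilon> Lk) \<pi> = gp H \<epsilon> Lk \<pi>"
      using opt_mdl[OF Lk A H e(1)] pvalue_mdl[OF pol len H] by (simp add: qf_def gp_def)
    have "(\<Sum>\<tau>\<in>trajs 2 A H. traj_prob 2 H (mdl H \<epsilon> Lk) \<pi> \<tau> * regret_from 2 2 A H (rw H) (mdl H \<epsilon> Lk) \<phi> n (Suc k) (D @ [(\<tau>, \<pi>)]))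
       = (\<Sum>\<tau>\<in>trajs 2 A H. ?P \<pi> \<tau> * Ev \<phi> (trajs 2 A H) ?P ?G n (Suc k) (D @ [(\<tau>, \<pi>)]) - (c + gp H \<epsilon> Lk \<pi>) * ?P \<pi> \<tau>)"
      by (rule sum.cong) (auto simp: TP[OF pol _ len H] ih algebra_simps)
    also have "\<dots> = (\<Sum>\<tau>\<in>trajs 2 A H. ?P \<pi> \<tau> * Ev \<phi> (trajs 2 A H) ?P ?G n (Suc k) (D @ [(\<tau>, \<pi>)])) - (c + gp H \<epsilon> Lk \<pi>)"
      by (simp add: sum_subtractf sum_distrib_left[symmetric] s1)
    finally show "opt_value 2 2 A H (rw H) (mdl H \<epsilon> Lk) - pvalue 2 2 A H (rw H) (mdl H \<epsilon> Lk) \<pi> +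
        (\<Sum>\<tau>\<in>trajs 2 A H. traj_prob 2 H (mdl H \<epsilon> Lk) \<pi> \<tau> * regret_from 2 2 A H (rw H) (mdl H \<epsilon> Lk) \<phi> n (Suc k) (D @ [(\<tau>, \<pi>)]))
      = (\<Sum>\<tau>\<in>trajs 2 A H. ?P \<pi> \<tau> * Ev \<phi> (trajs 2 A H) ?P ?G n (Suc k) (D @ [(\<tau>, \<pi>)])) + (- c)"
      using gap by simp
  qed
  also have "\<dots> = Ev \<phi> (trajs 2 A H) ?P ?G (Suc n) k D - c"
    unfolding Ev.simps
    by (subst Bochner_Integration.integral_add) (auto intro: INT[OF K L Ev_bdd[OF K L bG]])
  finally show ?case unfolding c_def by simp
qed



definition cnt :: "nat \<Rightarrow> nat list \<Rightarrow> data \<Rightarrow> real" where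
  "cnt H Lk D = (\<Sum>x\<leftarrow>D. if arm H (snd x) = Lk then 1 else 0)"

definition rho :: "nat \<Rightarrow> real \<Rightarrow> nat list \<Rightarrow> real \<Rightarrow> policy \<Rightarrow> traj \<Rightarrow> real" where
  "rho H \<epsilon> Lk q0 \<pi> \<tau> = (if \<tau> = tj H \<pi> 1 then qf H \<epsilon> Lk \<pi> / q0
      else if \<tau> = tj H \<pi> 0 then (1 - qf H \<epsilon> Lk \<pi>) / (1 - q0) else 1)"

definition hbf :: "nat \<Rightarrow> real \<Rightarrow> nat list \<Rightarrow> real \<Rightarrow> policy \<Rightarrow> real" where
  "hbf H \<epsilon> Lk q0 \<pi> = q0 * ln (qf H \<epsilon> Lk \<pi> / q0) + (1 - q0) * ln ((1 - qf H \<epsilon> Lk \<pi>) / (1 - q0))"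

lemma cnt_bounds: "0 \<le> cnt H Lk D \<and> cnt H Lk D \<le> real (length D)"
  unfolding cnt_def by (induction D) auto

lemma bdd_cnt: "bdd_len (cnt H Lk)"
  unfolding cnt_def by (rule bdd_len_sum_list[where C=1]) auto

lemma arm_bound:
  assumes L: "learning_alg A \<phi>" and Lk: "Lk \<in> Arms A H" and A: "1 \<le> A" and H: "1 \<le> H"
    and e: "0 < \<epsilon>" "\<epsilon> < 1/2" and q0: "0 < q0" "q0 < 1" and c: "0 < c"
  shows "Ev \<phi> (trajs 2 A H) (Qk H (qf H \<epsilon> Lk)) (cnt H Lk) K k []
     \<le> Ev \<phi> (trajs 2 A H) (Qk H (\<lambda>_. q0)) (cnt H Lk) K k []
       + real K / 2 * ((- Ev \<phi> (trajs 2 A H) (Qk H (\<lambda>_. q0)) (\<lambda>D. \<Sum>x\<leftarrow>D. hbf H \<epsilon> Lk q0 (snd x)) K k [] / 2) / c + 2 * c)"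
proof -
  let ?Tr = "trajs 2 A H"
  let ?P = "Qk H (\<lambda>_. q0)"
  let ?P' = "Qk H (qf H \<epsilon> Lk)"
  let ?\<rho> = "rho H \<epsilon> Lk q0"
  have K0: "kern A ?Tr ?P" by (rule kern_Qk) (use q0 H in auto)
  have K1: "kern A ?Tr ?P'" by (rule kern_qf) (use e H in auto)
  have qfv: "qf H \<epsilon> Lk \<pi> = 1/2 + \<epsilon> \<or> qf H \<epsilon> Lk \<pi> = 1/2 - \<epsilon>" for \<pi> by (simp add: qf_def)
  define C where "C = \<bar>ln ((1/2 + \<epsilon>) / q0)\<bar> + \<bar>ln ((1/2 - \<epsilon>) / q0)\<bar>
     + \<bar>ln ((1 - (1/2 + \<epsilon>)) / (1 - q0))\<bar> + \<bar>ln ((1 - (1/2 - \<epsilon>)) / (1 - q0))\<bar>"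
  have rpos: "0 < ?\<rho> \<pi> \<tau>" for \<pi> \<tau>
    using qfv[of \<pi>] e q0 by (auto simp: rho_def)
  have lnC: "\<bar>ln (?\<rho> \<pi> \<tau>)\<bar> \<le> C" for \<pi> \<tau>
    using qfv[of \<pi>] unfolding rho_def C_def by (auto)
  have ch: "?P' \<pi> \<tau> = ?P \<pi> \<tau> * ?\<rho> \<pi> \<tau>" for \<pi> \<tau>
    using q0 tj_ne[of H \<pi>] unfolding Qk_def rho_def by auto
  have fM: "0 \<le> cnt H Lk D' \<and> cnt H Lk D' \<le> real K" if "length D' = K" for D'
    using cnt_bounds[of H Lk D'] that by simp
  have tv: "Ev \<phi> ?Tr ?P' (cnt H Lk) K k [] \<le> Ev \<phi> ?Tr ?P (cnt H Lk) K k []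
     + real K/2 * ((1 - exp (Ev \<phi> ?Tr ?P (\<lambda>D. \<Sum>x\<leftarrow>D. ln (?\<rho> (snd x) (fst x))) K k [] / 2)) / c + 2 * c)"
    by (rule Ev_tv[OF K0 K1 L rpos lnC ch bdd_cnt fM c])
  have hbC: "\<bar>hbf H \<epsilon> Lk q0 \<pi>\<bar> \<le> C" for \<pi>
  proof -
    have a: "\<bar>ln (qf H \<epsilon> Lk \<pi> / q0)\<bar> \<le> C" "\<bar>ln ((1 - qf H \<epsilon> Lk \<pi>) / (1 - q0))\<bar> \<le> C"
      using qfv[of \<pi>] unfolding C_def by auto
    have "\<bar>hbf H \<epsilon> Lk q0 \<pi>\<bar> \<le> q0 * \<bar>ln (qf H \<epsilon> Lk \<pi> / q0)\<bar> + (1 - q0) * \<bar>ln ((1 - qf H \<epsilon> Lk \<pi>) / (1 - q0))\<bar>"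
      unfolding hbf_def using q0
      by (metis abs_of_pos abs_mult abs_triangle_ineq diff_gt_0_iff_gt)
    also have "\<dots> \<le> q0 * C + (1 - q0) * C"
      using a q0 by (intro add_mono mult_left_mono) auto
    finally show ?thesis by (simp add: algebra_simps)
  qed
  have hb: "hbf H \<epsilon> Lk q0 \<pi> = (\<Sum>\<tau>\<in>?Tr. ?P \<pi> \<tau> * ln (?\<rho> (snd (\<tau>, \<pi>)) (fst (\<tau>, \<pi>))))"
    if "\<pi> \<in> policies A" for \<pi>
    using Qk_sum[OF that H, of "\<lambda>_. q0" "\<lambda>\<tau>. ln (?\<rho> \<pi> \<tau>)"] tj_ne[of H \<pi>]
    by (simp add: hbf_def rho_def)
  have add: "Ev \<phi> ?Tr ?P (\<lambda>D. \<Sum>x\<leftarrow>D. ln (?\<rho> (snd x) (fst x))) K k [] - (\<Sum>x\<leftarrow>[]. ln (?\<rho> (snd x) (fst x)))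
     = Ev \<phi> ?Tr ?P (\<lambda>D. \<Sum>x\<leftarrow>D. hbf H \<epsilon> Lk q0 (snd x)) K k [] - (\<Sum>x\<leftarrow>[]. hbf H \<epsilon> Lk q0 (snd x))"
    using Ev_additive[OF K0 L, where h="\<lambda>x. ln (?\<rho> (snd x) (fst x))" and hb="hbf H \<epsilon> Lk q0" and C=C and C'=C
      and n=K and k=k and D="[]"] lnC hbC hb by simp
  define ES where "ES = Ev \<phi> ?Tr ?P (\<lambda>D. \<Sum>x\<leftarrow>D. hbf H \<epsilon> Lk q0 (snd x)) K k []"
  have "1 + ES / 2 \<le> exp (ES / 2)" by (rule exp_ge_add_one_self)
  then have "(1 - exp (ES / 2)) / c \<le> (- ES / 2) / c" using c by (intro divide_right_mono) linarith+
  then have "real K/2 * ((1 - exp (ES / 2)) / c + 2 * c) \<le> real K/2 * ((- ES / 2) / c + 2 * c)"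
    by (intro mult_left_mono) auto
  moreover have add': "Ev \<phi> ?Tr ?P (\<lambda>D. \<Sum>x\<leftarrow>D. ln (?\<rho> (snd x) (fst x))) K k [] = ES"
    using add unfolding ES_def by simp
  ultimately show ?thesis using tv unfolding add' ES_def[symmetric] by linarith
qed



lemma gp_sum: "(\<Sum>x\<leftarrow>D. gp H \<epsilon> Lk (snd x)) = 2 * \<epsilon> * real (length D) - 2 * \<epsilon> * cnt H Lk D"
  unfolding cnt_def by (induction D) (auto simp: gp_def algebra_simps)

lemma regret_cnt:
  assumes L: "learning_alg A \<phi>" and Lk: "Lk \<in> Arms A H" and A: "1 \<le> A" and H: "1 \<le> H"
    and e: "0 \<le> \<epsilon>" "\<epsilon> \<le> 1/2"
  shows "regret_from 2 2 A H (rw H) (mdl H \<epsilon> Lk) \<phi> K 1 []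
     = 2 * \<epsilon> * real K - 2 * \<epsilon> * Ev \<phi> (trajs 2 A H) (Qk H (qf H \<epsilon> Lk)) (cnt H Lk) K 1 []"
proof -
  let ?P = "Qk H (qf H \<epsilon> Lk)"
  have K: "kern A (trajs 2 A H) ?P" by (rule kern_qf[OF e H])
  have "regret_from 2 2 A H (rw H) (mdl H \<epsilon> Lk) \<phi> K 1 []
      = Ev \<phi> (trajs 2 A H) ?P (\<lambda>D. \<Sum>x\<leftarrow>D. gp H \<epsilon> Lk (snd x)) K 1 []"
    using regret_Ev[OF L Lk A H e, of K 1 "[]"] by simp
  also have "\<dots> = Ev \<phi> (trajs 2 A H) ?P (\<lambda>D. 2 * \<epsilon> * real K + (- 2 * \<epsilon>) * cnt H Lk D) K 1 []"
    by (rule Ev_cong[OF K L]) (simp add: gp_sum)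
  also have "\<dots> = 2 * \<epsilon> * real K - 2 * \<epsilon> * Ev \<phi> (trajs 2 A H) ?P (cnt H Lk) K 1 []"
    by (subst Ev_add[OF K L bdd_len_const bdd_len_mult[OF bdd_cnt]], simp only: Ev_const[OF K L] Ev_mult)
  finally show ?thesis .
qed

lemma finite_Arms: "finite (Arms A H)"
  unfolding Arms_def by (rule finite_lists_length_eq) auto

lemma card_Arms: "card (Arms A H) = A ^ (H - 1)"
  unfolding Arms_def using card_lists_length_eq[of "{0..<A}" "H - 1"] by simp

lemma Arms_ne: "1 \<le> A \<Longrightarrow> Arms A H \<noteq> {}"
proof -
  assume "1 \<le> A"
  then have "replicate (H - 1) 0 \<in> Arms A H" unfolding Arms_def by auto
  then show ?thesis by blast
qed

lemma sum_cnt: "finite S \<Longrightarrow> (\<Sum>Lk\<in>S. cnt H Lk D) \<le> real (length D)"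
proof (induction D)
  case Nil then show ?case by (simp add: cnt_def)
next
  case (Cons a D)
  have "(\<Sum>Lk\<in>S. cnt H Lk (a # D)) = (\<Sum>Lk\<in>S. (if arm H (snd a) = Lk then 1 else 0)) + (\<Sum>Lk\<in>S. cnt H Lk D)"
    by (simp add: cnt_def sum.distrib)
  also have "(\<Sum>Lk\<in>S. (if arm H (snd a) = Lk then 1 else 0 :: real)) \<le> 1"
    using Cons.prems by (simp add: sum.delta)
  finally show ?case using Cons by simp
qed

lemma sum_t:
  assumes L: "learning_alg A \<phi>" and K: "kern A Tr P" and S: "finite S"
  shows "(\<Sum>Lk\<in>S. Ev \<phi> Tr P (cnt H Lk) n k []) \<le> real n"
proof -
  have "(\<Sum>Lk\<in>S. Ev \<phi> Tr P (cnt H Lk) n k []) = Ev \<phi> Tr P (\<lambda>D. \<Sum>Lk\<in>S. cnt H Lk D) n k []"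
    by (rule Ev_sum[OF K L S bdd_cnt, symmetric])
  also have "\<dots> \<le> Ev \<phi> Tr P (\<lambda>D. real n) n k []"
    by (rule Ev_mono[OF K L bdd_len_sum[OF S bdd_cnt] bdd_len_const]) (use sum_cnt[OF S, of H] in force)
  also have "\<dots> = real n" by (rule Ev_const[OF K L])
  finally show ?thesis .
qed

lemma BReg_eq:
  assumes A: "1 \<le> A"
  shows "BReg 2 2 A H (rw H) (\<lambda>\<theta>. mdl H \<epsilon> (from_nat \<theta>)) (pmf_of_set (to_nat ` Arms A H)) \<phi> K
    = (\<Sum>Lk\<in>Arms A H. regret_from 2 2 A H (rw H) (mdl H \<epsilon> Lk) \<phi> K 1 []) / real (A ^ (H - 1))"
proof -
  have inj: "inj_on to_nat (Arms A H)" by (rule inj_onI) simp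
  have fin: "finite (to_nat ` Arms A H)" using finite_Arms by simp
  have ne: "to_nat ` Arms A H \<noteq> {}" using Arms_ne[OF A] by simp
  show ?thesis
    unfolding BReg_def integral_pmf_of_set[OF ne fin] sum.reindex[OF inj] card_image[OF inj] card_Arms
    by simp
qed



lemma sumlist_ind: "(\<Sum>x\<leftarrow>D. (if arm H (snd x) = Lk then a else 0)) = a * cnt H Lk D"
  unfolding cnt_def by (induction D) (auto simp: algebra_simps)

lemma sumlist_const: "(\<Sum>x\<leftarrow>D. (a::real)) = a * real (length D)"
  by (induction D) (auto simp: algebra_simps)

lemma hbf_big:
  assumes "0 < \<epsilon>" "\<epsilon> < 1/2"
  shows "hbf H \<epsilon> Lk (1/2 - \<epsilon>) \<pi> = (if arm H \<pi> = Lk then - (2 * \<epsilon> * ln ((1/2 + \<epsilon>) / (1/2 - \<epsilon>))) else 0)"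
proof -
  have a: "1 - (1/2 - \<epsilon>) = 1/2 + \<epsilon>" "1 - (1/2 + \<epsilon>) = 1/2 - \<epsilon>" by simp_all
  have "ln ((1/2 - \<epsilon>) / (1/2 + \<epsilon>)) = - ln ((1/2 + \<epsilon>) / (1/2 - \<epsilon>))"
    using assms by (simp add: ln_div)
  then show ?thesis using assms unfolding hbf_def qf_def a by (simp add: algebra_simps)
qed

lemma case_big:
  assumes L: "learning_alg A \<phi>" and A: "1 \<le> A" and H: "1 \<le> H"
    and N3: "3 \<le> A ^ (H - 1)" and NK: "A ^ (H - 1) \<le> K"
    and ed: "\<epsilon> = sqrt (real (A ^ (H - 1)) / real K) / 10"
  shows "BReg 2 2 A H (rw H) (\<lambda>\<theta>. mdl H \<epsilon> (from_nat \<theta>)) (pmf_of_set (to_nat ` Arms A H)) \<phi> K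
     \<ge> 1 / 20 * sqrt (real (A ^ (H - 1)) * real K)"
proof -
  define N where "N = real (A ^ (H - 1))"
  define k where "k = real K"
  have ed': "\<epsilon> = sqrt (N / k) / 10" unfolding ed N_def k_def ..
  have N3': "3 \<le> N" using N3 unfolding N_def by (metis of_nat_le_iff of_nat_numeral)
  have NK': "N \<le> k" using NK unfolding N_def k_def by (metis of_nat_le_iff)
  have k0: "0 < k" using N3' NK' by simp
  have e0: "0 < \<epsilon>" unfolding ed' using N3' k0 by simp
  have e1: "\<epsilon> \<le> 1/10"
  proof -
    have "N / k \<le> 1" using NK' k0 by simp
    then have "sqrt (N / k) \<le> 1" by simp
    then show ?thesis unfolding ed' by simp
  qed
  have esq: "\<epsilon>^2 = N / (100 * k)" unfolding ed' using N3' k0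
    by (simp add: power_divide)
  have ek: "\<epsilon> * k = sqrt (N * k) / 10"
  proof -
    have "sqrt (N / k) * k = sqrt (N / k) * sqrt (k^2)" using k0 by simp
    also have "\<dots> = sqrt (N / k * k^2)" by (rule real_sqrt_mult[symmetric])
    also have "N / k * k^2 = N * k" using k0 by (simp add: power2_eq_square)
    finally show ?thesis unfolding ed' by simp
  qed
  define lg where "lg = ln ((1/2 + \<epsilon>) / (1/2 - \<epsilon>))"
  define \<kappa> where "\<kappa> = 2 * \<epsilon> * lg"
  have l0: "0 \<le> lg" unfolding lg_def using e0 e1 by simp
  have l1: "lg \<le> 5 * \<epsilon>"
  proof -
    have "lg \<le> (1/2 + \<epsilon>) / (1/2 - \<epsilon>) - 1" unfolding lg_def by (rule ln_le_minus_one) (use e0 e1 in simp)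
    also have "\<dots> = 2 * \<epsilon> / (1/2 - \<epsilon>)" using e1 by (simp add: field_simps)
    also have "\<dots> \<le> 2 * \<epsilon> / (2/5)" using e0 e1 by (intro divide_left_mono) auto
    finally show ?thesis by simp
  qed
  have kap0: "0 \<le> \<kappa>" unfolding \<kappa>_def using e0 l0 by simp
  have kap1: "\<kappa> \<le> 10 * \<epsilon>^2" unfolding \<kappa>_def using l1 e0 by (simp add: power2_eq_square)
  let ?q0 = "1/2 - \<epsilon>"
  let ?P0 = "Qk H (\<lambda>_. ?q0)"
  let ?Tr = "trajs 2 A H"
  have K0: "kern A ?Tr ?P0" by (rule kern_Qk) (use e0 e1 H in auto)
  define t where "t = (\<lambda>Lk. Ev \<phi> ?Tr ?P0 (cnt H Lk) K 1 [])"
  define e where "e = (\<lambda>Lk. Ev \<phi> ?Tr (Qk H (qf H \<epsilon> Lk)) (cnt H Lk) K 1 [])"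
  have per: "e Lk \<le> t Lk + k * \<kappa> * t Lk * (6/4) + k / 6" if Lk: "Lk \<in> Arms A H" for Lk
  proof -
    have ab: "e Lk \<le> t Lk + k / 2 * ((- Ev \<phi> ?Tr ?P0 (\<lambda>D. \<Sum>x\<leftarrow>D. hbf H \<epsilon> Lk ?q0 (snd x)) K 1 [] / 2) / (1/6) + 2 * (1/6))"
      unfolding e_def t_def k_def by (rule arm_bound[OF L Lk A H]) (use e0 e1 in auto)
    have "(\<lambda>D. \<Sum>x\<leftarrow>D. hbf H \<epsilon> Lk ?q0 (snd x)) = (\<lambda>D. (- \<kappa>) * cnt H Lk D)"
      using hbf_big[OF e0] e1 by (simp add: sumlist_ind \<kappa>_def lg_def)
    then have "Ev \<phi> ?Tr ?P0 (\<lambda>D. \<Sum>x\<leftarrow>D. hbf H \<epsilon> Lk ?q0 (snd x)) K 1 [] = - \<kappa> * t Lk"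
      unfolding t_def by (simp only: Ev_mult)
    then show ?thesis using ab by (simp add: algebra_simps)
  qed
  have tsum: "(\<Sum>Lk\<in>Arms A H. t Lk) \<le> k" unfolding t_def k_def by (rule sum_t[OF L K0 finite_Arms])
  have esum: "(\<Sum>Lk\<in>Arms A H. e Lk) \<le> k + k * \<kappa> * k * (6/4) + k * N / 6"
  proof -
    have "(\<Sum>Lk\<in>Arms A H. e Lk) \<le> (\<Sum>Lk\<in>Arms A H. t Lk + k * \<kappa> * t Lk * (6/4) + k / 6)"
      by (rule sum_mono) (rule per)
    also have "\<dots> = (\<Sum>Lk\<in>Arms A H. (1 + k * \<kappa> * (6/4)) * t Lk + k / 6)"
      by (rule sum.cong) (auto simp: algebra_simps)
    also have "\<dots> = (1 + k * \<kappa> * (6/4)) * (\<Sum>Lk\<in>Arms A H. t Lk) + N * (k / 6)"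
      by (simp only: sum.distrib sum_distrib_left[symmetric] sum_constant card_Arms N_def)
    also have "\<dots> \<le> (1 + k * \<kappa> * (6/4)) * k + N * (k / 6)"
      using tsum kap0 k0 N3' by (intro add_mono mult_left_mono) auto
    finally show ?thesis by (simp add: algebra_simps)
  qed
  have reg: "regret_from 2 2 A H (rw H) (mdl H \<epsilon> Lk) \<phi> K 1 [] = 2 * \<epsilon> * k - 2 * \<epsilon> * e Lk"
    if "Lk \<in> Arms A H" for Lk
    unfolding e_def k_def by (rule regret_cnt[OF L that A H]) (use e0 e1 in auto)
  have "BReg 2 2 A H (rw H) (\<lambda>\<theta>. mdl H \<epsilon> (from_nat \<theta>)) (pmf_of_set (to_nat ` Arms A H)) \<phi> K
     = (\<Sum>Lk\<in>Arms A H. 2 * \<epsilon> * k - 2 * \<epsilon> * e Lk) / N"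
    unfolding BReg_eq[OF A] N_def using reg by (metis (no_types, lifting) sum.cong)
  also have "\<dots> = 2 * \<epsilon> * k - 2 * \<epsilon> * (\<Sum>Lk\<in>Arms A H. e Lk) / N"
  proof -
    have "(\<Sum>Lk\<in>Arms A H. 2 * \<epsilon> * k - 2 * \<epsilon> * e Lk) = real (card (Arms A H)) * (2 * \<epsilon> * k) - 2 * \<epsilon> * (\<Sum>Lk\<in>Arms A H. e Lk)"
      by (simp add: sum_subtractf sum_distrib_left)
    also have "real (card (Arms A H)) = N" unfolding card_Arms N_def ..
    finally show ?thesis using N3' by (simp add: field_simps)
  qed
  finally have br: "BReg 2 2 A H (rw H) (\<lambda>\<theta>. mdl H \<epsilon> (from_nat \<theta>)) (pmf_of_set (to_nat ` Arms A H)) \<phi> K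
     = 2 * \<epsilon> * k - 2 * \<epsilon> * (\<Sum>Lk\<in>Arms A H. e Lk) / N" .
  have "2 * \<epsilon> * (\<Sum>Lk\<in>Arms A H. e Lk) / N \<le> 2 * \<epsilon> * (k + k * \<kappa> * k * (6/4) + k * N / 6) / N"
    using esum e0 N3' by (intro divide_right_mono mult_left_mono) auto
  also have "\<dots> = 2 * \<epsilon> * k * (1 / N + \<kappa> * k / N * (6/4) + 1/6)"
    using N3' by (simp add: field_simps)
  also have "\<dots> \<le> 2 * \<epsilon> * k * (1 / 3 + 1/10 * (6/4) + 1/6)"
  proof -
    have "\<kappa> * k / N \<le> 10 * \<epsilon>^2 * k / N" using kap1 k0 N3' by (intro divide_right_mono mult_right_mono) auto
    also have "\<dots> = 1/10" unfolding esq using k0 N3' by (simp add: field_simps)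
    finally have "\<kappa> * k / N \<le> 1/10" .
    moreover have "1 / N \<le> 1/3" using N3' by simp
    ultimately show ?thesis using e0 k0 by (intro mult_left_mono) auto
  qed
  finally have "2 * \<epsilon> * (\<Sum>Lk\<in>Arms A H. e Lk) / N \<le> 2 * \<epsilon> * k * (13/20)" by simp
  then have "BReg 2 2 A H (rw H) (\<lambda>\<theta>. mdl H \<epsilon> (from_nat \<theta>)) (pmf_of_set (to_nat ` Arms A H)) \<phi> K
     \<ge> 2 * (\<epsilon> * k) * (7/20)" unfolding br by simp
  moreover have "2 * (\<epsilon> * k) * (7/20) \<ge> 1 / 20 * sqrt (N * k)"
    unfolding ek using N3' k0 by simp
  ultimately show ?thesis unfolding N_def k_def by linarith
qed



lemma hbf_two:
  assumes "0 < \<epsilon>" "\<epsilon> < 1/2"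
  shows "hbf H \<epsilon> Lk (1/2) \<pi> = (ln (1 + 2 * \<epsilon>) + ln (1 - 2 * \<epsilon>)) / 2"
proof -
  have a: "(1/2 + \<epsilon>) / (1/2) = 1 + 2 * \<epsilon>" "(1/2 - \<epsilon>) / (1/2) = 1 - 2 * \<epsilon>"
    "(1 - (1/2 + \<epsilon>)) / (1 - 1/2) = 1 - 2 * \<epsilon>" "(1 - (1/2 - \<epsilon>)) / (1 - 1/2) = 1 + 2 * \<epsilon>"
    by (simp_all add: field_simps)
  show ?thesis unfolding hbf_def qf_def by (simp only: a split: if_splits) simp
qed

lemma case_two:
  assumes L: "learning_alg A \<phi>" and A: "1 \<le> A" and H: "1 \<le> H"
    and N2: "A ^ (H - 1) = 2" and NK: "2 \<le> K"
    and ed: "\<epsilon> = 1 / (6 * sqrt (real K))"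
  shows "BReg 2 2 A H (rw H) (\<lambda>\<theta>. mdl H \<epsilon> (from_nat \<theta>)) (pmf_of_set (to_nat ` Arms A H)) \<phi> K
     \<ge> 1 / 20 * sqrt (real (A ^ (H - 1)) * real K)"
proof -
  define k where "k = real K"
  have k2: "2 \<le> k" using NK unfolding k_def by simp
  have ed': "\<epsilon> = 1 / (6 * sqrt k)" unfolding ed k_def ..
  have sk: "1 \<le> sqrt k" using k2 by simp
  have e0: "0 < \<epsilon>" unfolding ed' using sk by simp
  have e1: "\<epsilon> \<le> 1/6" unfolding ed' using sk by (simp add: field_simps)
  have esq: "\<epsilon>^2 = 1 / (36 * k)" unfolding ed' using k2 by (simp add: power_divide power_mult_distrib)
  have ek: "\<epsilon> * k = sqrt k / 6"
  proof -
    have "k = sqrt k * sqrt k" using k2 by simp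
    then show ?thesis unfolding ed' using sk by (simp add: field_simps)
  qed
  define h0 where "h0 = (ln (1 + 2 * \<epsilon>) + ln (1 - 2 * \<epsilon>)) / 2"
  have h0b: "- h0 \<le> 1 / (17 * k)"
  proof -
    define x where "x = 4 * \<epsilon>^2"
    have x: "x = 1 / (9 * k)" unfolding x_def esq by simp
    have x1: "x \<le> 1/18" unfolding x using k2 by (simp add: field_simps)
    have x0: "0 < x" unfolding x using k2 by simp
    have h0e: "h0 = ln (1 - x) / 2"
    proof -
      have "ln (1 + 2 * \<epsilon>) + ln (1 - 2 * \<epsilon>) = ln ((1 + 2 * \<epsilon>) * (1 - 2 * \<epsilon>))"
        using e0 e1 by (simp add: ln_mult)
      also have "(1 + 2 * \<epsilon>) * (1 - 2 * \<epsilon>) = 1 - x" unfolding x_def by (simp add: power2_eq_square algebra_simps)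
      finally show ?thesis unfolding h0_def by simp
    qed
    have B: "- ln (1 - x) \<le> x / (1 - x)"
    proof -
      have "ln (1 / (1 - x)) \<le> 1 / (1 - x) - 1" by (rule ln_le_minus_one) (use x1 in simp)
      moreover have "ln (1 / (1 - x)) = - ln (1 - x)" using x1 by (simp add: ln_div)
      moreover have "1 / (1 - x) - 1 = x / (1 - x)" using x1 by (simp add: field_simps)
      ultimately show ?thesis by simp
    qed
    have C: "x / (1 - x) \<le> x / (17/18)" using x0 x1 by (intro divide_left_mono) auto
    have D: "x / (17/18) / 2 = 1 / (17 * k)" unfolding x using k2 by (simp add: field_simps)
    have "- h0 = (- ln (1 - x)) / 2" unfolding h0e by simp
    also have "\<dots> \<le> (x / (1 - x)) / 2" using B by (rule divide_right_mono) simp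
    also have "\<dots> \<le> (x / (17/18)) / 2" using C by (rule divide_right_mono) simp
    finally show ?thesis using D by simp
  qed
  let ?P0 = "Qk H (\<lambda>_. 1/2)"
  let ?Tr = "trajs 2 A H"
  have K0: "kern A ?Tr ?P0" by (rule kern_Qk) (use H in auto)
  define t where "t = (\<lambda>Lk. Ev \<phi> ?Tr ?P0 (cnt H Lk) K 1 [])"
  define e where "e = (\<lambda>Lk. Ev \<phi> ?Tr (Qk H (qf H \<epsilon> Lk)) (cnt H Lk) K 1 [])"
  have per: "e Lk \<le> t Lk - 2 * h0 * k^2 + k / 8" if Lk: "Lk \<in> Arms A H" for Lk
  proof -
    have ab: "e Lk \<le> t Lk + k / 2 * ((- Ev \<phi> ?Tr ?P0 (\<lambda>D. \<Sum>x\<leftarrow>D. hbf H \<epsilon> Lk (1/2) (snd x)) K 1 [] / 2) / (1/8) + 2 * (1/8))"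
      unfolding e_def t_def k_def by (rule arm_bound[OF L Lk A H]) (use e0 e1 in auto)
    have hbfe: "(\<lambda>D. \<Sum>x\<leftarrow>D. hbf H \<epsilon> Lk (1/2) (snd x)) = (\<lambda>D. h0 * real (length D))"
    proof -
      have hb: "hbf H \<epsilon> Lk (1/2) \<pi> = h0" for \<pi> using hbf_two[OF e0] e1 unfolding h0_def by simp
      show ?thesis by (simp only: hb sumlist_const)
    qed
    have "Ev \<phi> ?Tr ?P0 (\<lambda>D. \<Sum>x\<leftarrow>D. hbf H \<epsilon> Lk (1/2) (snd x)) K 1 [] = Ev \<phi> ?Tr ?P0 (\<lambda>D. h0 * k) K 1 []"
      unfolding k_def hbfe by (rule Ev_cong[OF K0 L]) simp
    also have "\<dots> = h0 * k" by (rule Ev_const[OF K0 L])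
    finally show ?thesis using ab by (simp add: algebra_simps power2_eq_square)
  qed
  have tsum: "(\<Sum>Lk\<in>Arms A H. t Lk) \<le> k" unfolding t_def k_def by (rule sum_t[OF L K0 finite_Arms])
  have cA: "real (card (Arms A H)) = 2" unfolding card_Arms N2 by simp
  have esum: "(\<Sum>Lk\<in>Arms A H. e Lk) \<le> k + 2 * (- 2 * h0 * k^2 + k / 8)"
  proof -
    have "(\<Sum>Lk\<in>Arms A H. e Lk) \<le> (\<Sum>Lk\<in>Arms A H. t Lk + (- 2 * h0 * k^2 + k / 8))"
      by (rule sum_mono) (use per in force)
    also have "\<dots> = (\<Sum>Lk\<in>Arms A H. t Lk) + 2 * (- 2 * h0 * k^2 + k / 8)"
      by (simp only: sum.distrib sum_constant cA) (simp add: algebra_simps)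
    finally show ?thesis using tsum by linarith
  qed
  have reg: "regret_from 2 2 A H (rw H) (mdl H \<epsilon> Lk) \<phi> K 1 [] = 2 * \<epsilon> * k - 2 * \<epsilon> * e Lk"
    if "Lk \<in> Arms A H" for Lk
    unfolding e_def k_def by (rule regret_cnt[OF L that A H]) (use e0 e1 in auto)
  have "BReg 2 2 A H (rw H) (\<lambda>\<theta>. mdl H \<epsilon> (from_nat \<theta>)) (pmf_of_set (to_nat ` Arms A H)) \<phi> K
     = (\<Sum>Lk\<in>Arms A H. 2 * \<epsilon> * k - 2 * \<epsilon> * e Lk) / 2"
    unfolding BReg_eq[OF A] N2 using reg by (metis (no_types, lifting) sum.cong of_nat_numeral)
  also have "\<dots> = 2 * \<epsilon> * k - \<epsilon> * (\<Sum>Lk\<in>Arms A H. e Lk)"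
  proof -
    have "(\<Sum>Lk\<in>Arms A H. 2 * \<epsilon> * k - 2 * \<epsilon> * e Lk) = real (card (Arms A H)) * (2 * \<epsilon> * k) - 2 * \<epsilon> * (\<Sum>Lk\<in>Arms A H. e Lk)"
      by (simp add: sum_subtractf sum_distrib_left)
    then show ?thesis unfolding cA by simp
  qed
  finally have br: "BReg 2 2 A H (rw H) (\<lambda>\<theta>. mdl H \<epsilon> (from_nat \<theta>)) (pmf_of_set (to_nat ` Arms A H)) \<phi> K
     = 2 * \<epsilon> * k - \<epsilon> * (\<Sum>Lk\<in>Arms A H. e Lk)" .
  have "\<epsilon> * (\<Sum>Lk\<in>Arms A H. e Lk) \<le> \<epsilon> * (k + 2 * (- 2 * h0 * k^2 + k / 8))"
    using esum e0 by (intro mult_left_mono) auto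
  also have "\<dots> = \<epsilon> * k * (5/4 + 4 * (- h0) * k)" by (simp add: algebra_simps power2_eq_square)
  also have "\<dots> \<le> \<epsilon> * k * (5/4 + 4 * (1 / (17 * k)) * k)"
    using h0b e0 k2 by (intro mult_left_mono add_left_mono mult_right_mono) auto
  also have "\<dots> = \<epsilon> * k * (5/4 + 4/17)" using k2 by simp
  finally have "BReg 2 2 A H (rw H) (\<lambda>\<theta>. mdl H \<epsilon> (from_nat \<theta>)) (pmf_of_set (to_nat ` Arms A H)) \<phi> K
     \<ge> (\<epsilon> * k) * (35/68)" unfolding br by simp
  moreover have "(\<epsilon> * k) * (35/68) \<ge> 1 / 20 * sqrt (2 * k)"
  proof -
    have "sqrt 2 \<le> 3/2" by (rule real_le_lsqrt) (auto simp: power2_eq_square)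
    then have "sqrt 2 * sqrt k \<le> 3/2 * sqrt k" using sk by (intro mult_right_mono) auto
    then have "sqrt (2 * k) \<le> 3/2 * sqrt k" by (simp add: real_sqrt_mult)
    then show ?thesis unfolding ek using sk by linarith
  qed
  ultimately show ?thesis unfolding N2 k_def by simp
qed


theorem proposition2:
  fixes A H K :: nat
  assumes "A \<ge> 2" and "H \<ge> 2" and "K \<ge> A ^ (H - 1)"
  shows "\<exists>(r :: nat \<Rightarrow> nat \<Rightarrow> nat \<Rightarrow> real) (\<Theta> :: nat set) (par :: nat \<Rightarrow> model) (prior :: nat pmf).
           valid_rewards 2 A H r \<and>
           set_pmf prior \<subseteq> \<Theta> \<and>
           (\<forall>\<theta>\<in>\<Theta>. valid_model 2 2 A H (par \<theta>)) \<and>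
           (\<forall>\<phi>. learning_alg A \<phi> \<longrightarrow>
              BReg 2 2 A H r par prior \<phi> K \<ge> 1 / 20 * sqrt (real (A ^ (H - 1)) * real K))"
proof -
  have A: "1 \<le> A" and H: "1 \<le> H" using assms by auto
  have N2: "2 \<le> A ^ (H - 1)"
  proof -
    have "A ^ 1 \<le> A ^ (H - 1)" using assms by (intro power_increasing) auto
    then show ?thesis using assms by simp
  qed
  have K2: "2 \<le> K" using N2 assms by linarith
  define \<epsilon> where "\<epsilon> = (if A ^ (H - 1) = 2 then 1 / (6 * sqrt (real K)) else sqrt (real (A ^ (H - 1)) / real K) / 10)"
  have e0: "0 \<le> \<epsilon>" unfolding \<epsilon>_def by simp
  have e1: "\<epsilon> \<le> 1/2"
  proof (cases "A ^ (H - 1) = 2")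
    case True
    have "1 \<le> sqrt (real K)" using K2 by simp
    then have "1 / (6 * sqrt (real K)) \<le> 1 / 6" by (simp add: field_simps)
    then show ?thesis using True unfolding \<epsilon>_def by simp
  next
    case False
    have "real (A ^ (H - 1)) \<le> real K" using assms(3) by (metis of_nat_le_iff)
    then have "real (A ^ (H - 1)) / real K \<le> 1" using K2 by (simp add: divide_le_eq_1)
    then have "sqrt (real (A ^ (H - 1)) / real K) \<le> 1" by simp
    moreover have "\<epsilon> = sqrt (real (A ^ (H - 1)) / real K) / 10" using False unfolding \<epsilon>_def by (simp only: if_False)
    ultimately show ?thesis by linarith
  qed
  have fin: "finite (to_nat ` Arms A H)" using finite_Arms by simp
  have ne: "to_nat ` Arms A H \<noteq> {}" using Arms_ne[OF A] by simp
  show ?thesis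
  proof (intro exI conjI allI impI ballI)
    show "valid_rewards 2 A H (rw H)" by (rule valid_rw)
    show "set_pmf (pmf_of_set (to_nat ` Arms A H)) \<subseteq> to_nat ` Arms A H"
      using fin ne by simp
    fix \<theta> show "valid_model 2 2 A H (mdl H \<epsilon> (from_nat \<theta>))" by (rule valid_mdl[OF e0 e1])
  next
    fix \<phi> :: "nat \<Rightarrow> data \<Rightarrow> policy pmf" assume L: "learning_alg A \<phi>"
    show "BReg 2 2 A H (rw H) (\<lambda>\<theta>. mdl H \<epsilon> (from_nat \<theta>)) (pmf_of_set (to_nat ` Arms A H)) \<phi> K
       \<ge> 1 / 20 * sqrt (real (A ^ (H - 1)) * real K)"
    proof (cases "A ^ (H - 1) = 2")
      case True
      show ?thesis by (rule case_two[OF L A H True K2]) (simp only: \<epsilon>_def True, simp)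
    next
      case False
      have N3: "3 \<le> A ^ (H - 1)" using N2 False by simp
      show ?thesis by (rule case_big[OF L A H N3 assms(3)]) (simp only: \<epsilon>_def False if_False)
    qed
  qed
qed

end
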